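(* Let $F$ be an infinite family of index sets linearly ordered by $\subseteq$ such that $I_1\subsetneq I_2$ in $F$ implies $I_2\setminus I_1$ is infinite, and let $\mathcal{T}_F=\{T_I\mid I\in F\}$. Let $J$ be an index set with $T_J\notin\mathcal{T}_F$. Then $T_J\in\mathrm{Cl}_E(\mathcal{T}_F)$ if and only if $J$ is an (upper or lower) accumulation point for some infinite $F'\subseteq F$.
   Context: A predicate symbol $R$ is non-empty for a theory $T$ if $T\vdash\exists\bar x R(\bar x)$, empty otherwise. A complete theory $T$ in a predicate language is language uniform (LU) if for each arity $m$, every permutation of the set of $m$-ary symbols non-empty for $T$ preserves $T$. Let $T_0$ be a complete LU-theory in a relational language $\Sigma_0$, let $n\ge1$, and let $\{R_k\mid k\in I_0\}$, $I_0$ infinite, be the set of $n$-ary symbols of $\Sigma_0$ that are non-empty for $T_0$. Let $\Sigma'=\{R_k\mid k\in I_0\}\cup\{$symbols of $\Sigma_0$ of arity $\neq n\}$. An index set is an infinite $I\subseteq I_0$ with $|I|=|I_0|$ and $|I_0\setminus I|$ equal to the number of $n$-ary symbols of $\Sigma_0$ that are empty for $T_0$. For an index set $I$, $T_I$ is the complete $\Sigma'$-theory axiomatized by the restriction of $T_0$ to the language $\{R_k\mid k\in I\}\cup\{$symbols of arity $\ne n\}$ together with $\{\forall\bar x\neg R_l(\bar x)\mid l\in I_0\setminus I\}$. $E$-closure (over $\Sigma'$): let $E$ be a new binary symbol. The $E$-combination of a family $(\mathcal{A}_i)_i$ of $\Sigma'$-structures with disjoint universes is the $(\Sigma'\cup\{E\})$-structure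 on $\bigcup_iA_i$ with $E$ the equivalence relation whose classes are the $A_i$ and each $R\in\Sigma'$ interpreted as $\bigcup_iR^{\mathcal{A}_i}$. For a set $\mathcal{T}$ of complete $\Sigma'$-theories, $\mathrm{Cl}_E(\mathcal{T})$ is the set of complete theories of the $E$-classes (as induced $\Sigma'$-structures) of structures elementarily equivalent to some $E$-combination of structures whose theories lie in $\mathcal{T}$. For infinite $F'\subseteq F$: $\bigcup F'$ is the upper accumulation point of $F'$ if $\bigcup F'\notin F'$, and $\bigcap F'$ is the lower accumulation point of $F'$ if $\bigcap F'\notin F'$. *)

theory Defs
  imports Main "HOL-Library.Equipollence"
begin

datatype 'p fm =
    Eq nat nat
  | Rel 'p "nat list"
  | Neg "'p fm"
  | Conj "'p fm" "'p fm"
  | Ex nat "'p fm"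

fun fv :: "'p fm \<Rightarrow> nat set" where
  "fv (Eq x y) = {x, y}"
| "fv (Rel p xs) = set xs"
| "fv (Neg \<phi>) = fv \<phi>"
| "fv (Conj \<phi> \<psi>) = fv \<phi> \<union> fv \<psi>"
| "fv (Ex x \<phi>) = fv \<phi> - {x}"

fun wf_fm :: "('p \<Rightarrow> nat) \<Rightarrow> 'p set \<Rightarrow> 'p fm \<Rightarrow> bool" where
  "wf_fm ar \<Sigma> (Eq x y) = True"
| "wf_fm ar \<Sigma> (Rel p xs) = (p \<in> \<Sigma> \<and> length xs = ar p)"
| "wf_fm ar \<Sigma> (Neg \<phi>) = wf_fm ar \<Sigma> \<phi>"
| "wf_fm ar \<Sigma> (Conj \<phi> \<psi>) = (wf_fm ar \<Sigma> \<phi> \<and> wf_fm ar \<Sigma> \<psi>)"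
| "wf_fm ar \<Sigma> (Ex x \<phi>) = wf_fm ar \<Sigma> \<phi>"

definition sentence :: "('p \<Rightarrow> nat) \<Rightarrow> 'p set \<Rightarrow> 'p fm \<Rightarrow> bool" where
  "sentence ar \<Sigma> \<phi> \<longleftrightarrow> wf_fm ar \<Sigma> \<phi> \<and> fv \<phi> = {}"

definition exs :: "nat list \<Rightarrow> 'p fm \<Rightarrow> 'p fm" where
  "exs vs \<phi> = foldr Ex vs \<phi>"

definition alls :: "nat list \<Rightarrow> 'p fm \<Rightarrow> 'p fm" where
  "alls vs \<phi> = foldr (\<lambda>x \<psi>. Neg (Ex x (Neg \<psi>))) vs \<phi>"

record ('p, 'u) struc =
  sdom :: "'u set"
  sint :: "'p \<Rightarrow> 'u list set"

definition is_struct :: "('p \<Rightarrow> nat) \<Rightarrow> 'p set \<Rightarrow> ('p, 'u) struc \<Rightarrow> bool" where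
  "is_struct ar \<Sigma> M \<longleftrightarrow> sdom M \<noteq> {} \<and>
     (\<forall>p\<in>\<Sigma>. sint M p \<subseteq> {xs. length xs = ar p \<and> set xs \<subseteq> sdom M})"

fun sat :: "('p, 'u) struc \<Rightarrow> (nat \<Rightarrow> 'u) \<Rightarrow> 'p fm \<Rightarrow> bool" where
  "sat M v (Eq x y) = (v x = v y)"
| "sat M v (Rel p xs) = (map v xs \<in> sint M p)"
| "sat M v (Neg \<phi>) = (\<not> sat M v \<phi>)"
| "sat M v (Conj \<phi> \<psi>) = (sat M v \<phi> \<and> sat M v \<psi>)"
| "sat M v (Ex x \<phi>) = (\<exists>a\<in>sdom M. sat M (v(x := a)) \<phi>)"

definition models :: "('p, 'u) struc \<Rightarrow> 'p fm \<Rightarrow> bool" where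
  "models M \<phi> \<longleftrightarrow> (\<forall>v. range v \<subseteq> sdom M \<longrightarrow> sat M v \<phi>)"

definition Th :: "('p \<Rightarrow> nat) \<Rightarrow> 'p set \<Rightarrow> ('p, 'u) struc \<Rightarrow> 'p fm set" where
  "Th ar \<Sigma> M = {\<phi>. sentence ar \<Sigma> \<phi> \<and> models M \<phi>}"

text \<open>Semantic consequence (standing in for \<open>\<turnstile>\<close>, by the completeness theorem),
  evaluated in structures whose universes are subsets of the type 'u.\<close>
definition entails :: "'u itself \<Rightarrow> ('p \<Rightarrow> nat) \<Rightarrow> 'p set \<Rightarrow> 'p fm set \<Rightarrow> 'p fm \<Rightarrow> bool" where
  "entails _ ar \<Sigma> T \<phi> \<longleftrightarrow>
     (\<forall>M :: ('p, 'u) struc. is_struct ar \<Sigma> M \<and> (\<forall>\<psi>\<in>T. models M \<psi>) \<longrightarrow> models M \<phi>)"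

definition complete_theory :: "'u itself \<Rightarrow> ('p \<Rightarrow> nat) \<Rightarrow> 'p set \<Rightarrow> 'p fm set \<Rightarrow> bool" where
  "complete_theory _ ar \<Sigma> T \<longleftrightarrow>
     T \<subseteq> {\<phi>. sentence ar \<Sigma> \<phi>}
     \<and> (\<exists>M :: ('p, 'u) struc. is_struct ar \<Sigma> M \<and> (\<forall>\<psi>\<in>T. models M \<psi>))
     \<and> (\<forall>\<phi>. sentence ar \<Sigma> \<phi> \<longrightarrow> \<phi> \<in> T \<or> Neg \<phi> \<in> T)"

definition nonempty_sym :: "'u itself \<Rightarrow> ('p \<Rightarrow> nat) \<Rightarrow> 'p set \<Rightarrow> 'p fm set \<Rightarrow> 'p \<Rightarrow> bool" where
  "nonempty_sym u ar \<Sigma> T R \<longleftrightarrow> entails u ar \<Sigma> T (exs [0..<ar R] (Rel R [0..<ar R]))"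

definition LU :: "'u itself \<Rightarrow> ('p \<Rightarrow> nat) \<Rightarrow> 'p set \<Rightarrow> 'p fm set \<Rightarrow> bool" where
  "LU u ar \<Sigma> T \<longleftrightarrow>
     (\<forall>m \<sigma>. let S = {R \<in> \<Sigma>. ar R = m \<and> nonempty_sym u ar \<Sigma> T R} in
        bij_betw \<sigma> S S \<and> (\<forall>x. x \<notin> S \<longrightarrow> \<sigma> x = x) \<longrightarrow> map_fm \<sigma> ` T = T)"

text \<open>The non-empty n-ary symbols are indexed by themselves: \<open>R\<^sub>k = k\<close>, \<open>I\<^sub>0\<close> = set of them.\<close>
definition I0 :: "'u itself \<Rightarrow> ('s \<Rightarrow> nat) \<Rightarrow> 's set \<Rightarrow> 's fm set \<Rightarrow> nat \<Rightarrow> 's set" where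
  "I0 u ar \<Sigma>0 T0 n = {R \<in> \<Sigma>0. ar R = n \<and> nonempty_sym u ar \<Sigma>0 T0 R}"

definition empty_nary :: "'u itself \<Rightarrow> ('s \<Rightarrow> nat) \<Rightarrow> 's set \<Rightarrow> 's fm set \<Rightarrow> nat \<Rightarrow> 's set" where
  "empty_nary u ar \<Sigma>0 T0 n = {R \<in> \<Sigma>0. ar R = n} - I0 u ar \<Sigma>0 T0 n"

definition Sigma' :: "'u itself \<Rightarrow> ('s \<Rightarrow> nat) \<Rightarrow> 's set \<Rightarrow> 's fm set \<Rightarrow> nat \<Rightarrow> 's set" where
  "Sigma' u ar \<Sigma>0 T0 n = I0 u ar \<Sigma>0 T0 n \<union> {R \<in> \<Sigma>0. ar R \<noteq> n}"

definition index_set :: "'u itself \<Rightarrow> ('s \<Rightarrow> nat) \<Rightarrow> 's set \<Rightarrow> 's fm set \<Rightarrow> nat \<Rightarrow> 's set \<Rightarrow> bool" where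
  "index_set u ar \<Sigma>0 T0 n I \<longleftrightarrow>
     I \<subseteq> I0 u ar \<Sigma>0 T0 n \<and> infinite I \<and> eqpoll I (I0 u ar \<Sigma>0 T0 n)
     \<and> eqpoll (I0 u ar \<Sigma>0 T0 n - I) (empty_nary u ar \<Sigma>0 T0 n)"

definition TI :: "'u itself \<Rightarrow> ('s \<Rightarrow> nat) \<Rightarrow> 's set \<Rightarrow> 's fm set \<Rightarrow> nat \<Rightarrow> 's set \<Rightarrow> 's fm set" where
  "TI u ar \<Sigma>0 T0 n I =
     (let L = I \<union> {R \<in> \<Sigma>0. ar R \<noteq> n};
          Ax = {\<psi> \<in> T0. sentence ar L \<psi>}
               \<union> {alls [0..<ar l] (Neg (Rel l [0..<ar l])) | l. l \<in> I0 u ar \<Sigma>0 T0 n - I}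
      in {\<phi>. sentence ar (Sigma' u ar \<Sigma>0 T0 n) \<phi> \<and> entails u ar (Sigma' u ar \<Sigma>0 T0 n) Ax \<phi>})"

text \<open>Language \<open>\<Sigma> \<union> {E}\<close>: symbols \<open>Some R\<close> for \<open>R \<in> \<Sigma>\<close>, and \<open>None\<close> = E (binary).\<close>
definition arE :: "('p \<Rightarrow> nat) \<Rightarrow> 'p option \<Rightarrow> nat" where
  "arE ar q = (case q of None \<Rightarrow> 2 | Some p \<Rightarrow> ar p)"

definition SigE :: "'p set \<Rightarrow> 'p option set" where
  "SigE \<Sigma> = insert None (Some ` \<Sigma>)"

definition Ecomb :: "('p, 'u) struc set \<Rightarrow> ('p option, 'u) struc" where
  "Ecomb \<A> = \<lparr> sdom = \<Union> (sdom ` \<A>),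
     sint = (\<lambda>q. case q of
                None \<Rightarrow> {[a, b] | a b. \<exists>A\<in>\<A>. a \<in> sdom A \<and> b \<in> sdom A}
              | Some p \<Rightarrow> \<Union>A\<in>\<A>. sint A p) \<rparr>"

definition induced :: "('p option, 'u) struc \<Rightarrow> 'u set \<Rightarrow> ('p, 'u) struc" where
  "induced M C = \<lparr> sdom = C, sint = (\<lambda>p. {xs \<in> sint M (Some p). set xs \<subseteq> C}) \<rparr>"

definition ClE :: "'u itself \<Rightarrow> ('p \<Rightarrow> nat) \<Rightarrow> 'p set \<Rightarrow> 'p fm set set \<Rightarrow> 'p fm set set" where
  "ClE _ ar \<Sigma> \<T> =
     {Th ar \<Sigma> (induced M C) | (M :: ('p option, 'u) struc) C.
        (\<exists>\<A> :: ('p, 'u) struc set.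
            \<A> \<noteq> {}
          \<and> (\<forall>A\<in>\<A>. is_struct ar \<Sigma> A \<and> Th ar \<Sigma> A \<in> \<T>)
          \<and> pairwise (\<lambda>A B. sdom A \<inter> sdom B = {}) \<A>
          \<and> is_struct (arE ar) (SigE \<Sigma>) M
          \<and> Th (arE ar) (SigE \<Sigma>) M = Th (arE ar) (SigE \<Sigma>) (Ecomb \<A>))
      \<and> (\<exists>a\<in>sdom M. C = {b \<in> sdom M. [a, b] \<in> sint M None})}"

end

theory Submission
  imports Defs
begin

fun syms :: "'p fm \<Rightarrow> 'p set" where
  "syms (Eq x y) = {}" | "syms (Rel p xs) = {p}" | "syms (Neg \<phi>) = syms \<phi>"
| "syms (Conj \<phi> \<psi>) = syms \<phi> \<union> syms \<psi>" | "syms (Ex x \<phi>) = syms \<phi>"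

lemma finite_syms: "finite (syms \<phi>)" by (induct \<phi>) auto

lemma wf_restrict: "wf_fm ar \<Sigma> \<phi> \<Longrightarrow> syms \<phi> \<subseteq> Q \<Longrightarrow> wf_fm ar (\<Sigma> \<inter> Q) \<phi>"
  by (induct \<phi>) auto

lemma wf_mono: "wf_fm ar \<Sigma> \<phi> \<Longrightarrow> \<Sigma> \<subseteq> \<Sigma>' \<Longrightarrow> wf_fm ar \<Sigma>' \<phi>"
  by (induct \<phi>) auto

lemma wf_syms: "wf_fm ar \<Sigma> \<phi> \<Longrightarrow> syms \<phi> \<subseteq> \<Sigma>"
  by (induct \<phi>) auto

lemma map_agree: "\<forall>x\<in>set xs. v x = w x \<Longrightarrow> map v xs = map w xs"
  by (induct xs) auto

lemma sat_fv: "\<forall>x\<in>fv \<phi>. (v::nat\<Rightarrow>_) x = w x \<Longrightarrow> sat M v \<phi> = sat M w \<phi>"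
proof (induct \<phi> arbitrary: v w)
  case (Rel p xs)
  then show ?case by (metis map_agree fv.simps(2) sat.simps(2))
next
  case (Conj a b)
  have "sat M v a = sat M w a" by (rule Conj.hyps(1)) (use Conj.prems in auto)
  moreover have "sat M v b = sat M w b" by (rule Conj.hyps(2)) (use Conj.prems in auto)
  ultimately show ?case by simp
next
  case (Ex x \<phi>)
  have "\<And>a. sat M (v(x:=a)) \<phi> = sat M (w(x:=a)) \<phi>"
    by (rule Ex.hyps) (use Ex.prems in auto)
  then show ?case by simp
qed auto

lemma iso_sat:
  assumes inj: "inj_on h (sdom M1)" and img: "h ` sdom M1 = sdom M2"
    and rel: "\<And>p xs. p \<in> P \<Longrightarrow> set xs \<subseteq> sdom M1 \<Longrightarrow> (map h xs \<in> sint M2 p) = (xs \<in> sint M1 p)"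
  shows "wf_fm ar P \<phi> \<Longrightarrow> range (v::nat\<Rightarrow>_) \<subseteq> sdom M1 \<Longrightarrow> sat M2 (h \<circ> v) \<phi> = sat M1 v \<phi>"
proof (induct \<phi> arbitrary: v)
  case (Eq x y)
  have "v x \<in> sdom M1" "v y \<in> sdom M1" using Eq.prems(2) by auto
  then show ?case using inj by (simp add: inj_on_eq_iff)
next
  case (Rel p xs)
  have "set (map v xs) \<subseteq> sdom M1" using Rel.prems(2) by auto
  then show ?case using rel[of p "map v xs"] Rel.prems(1) by (simp add: comp_def)
next
  case (Ex x \<phi>)
  have eq: "(h \<circ> v)(x := h b) = h \<circ> (v(x := b))" for b by (auto simp: fun_eq_iff)
  have "sat M2 (h \<circ> v) (Ex x \<phi>) = (\<exists>a\<in>h ` sdom M1. sat M2 ((h \<circ> v)(x := a)) \<phi>)"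
    using img by simp
  also have "\<dots> = (\<exists>b\<in>sdom M1. sat M2 ((h \<circ> v)(x := h b)) \<phi>)" by blast
  also have "\<dots> = (\<exists>b\<in>sdom M1. sat M1 (v(x:=b)) \<phi>)"
  proof (intro bex_cong refl)
    fix b assume b: "b \<in> sdom M1"
    have r: "range (v(x:=b)) \<subseteq> sdom M1" using Ex.prems(2) b by (auto simp: image_subset_iff)
    have w: "wf_fm ar P \<phi>" using Ex.prems(1) by simp
    show "sat M2 ((h \<circ> v)(x := h b)) \<phi> = sat M1 (v(x:=b)) \<phi>" unfolding eq by (rule Ex.hyps[OF w r])
  qed
  finally show ?case by (simp only: sat.simps)
qed auto

lemma iso_models:
  assumes inj: "inj_on h (sdom M1)" and img: "h ` sdom M1 = sdom M2"
    and rel: "\<And>p xs. p \<in> P \<Longrightarrow> set xs \<subseteq> sdom M1 \<Longrightarrow> (map h xs \<in> sint M2 p) = (xs \<in> sint M1 p)"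
    and wf: "wf_fm ar P \<phi>"
  shows "models M2 \<phi> = models M1 \<phi>"
proof
  assume m2: "models M2 \<phi>"
  show "models M1 \<phi>" unfolding models_def
  proof (intro allI impI)
    fix v :: "nat \<Rightarrow> _" assume v: "range v \<subseteq> sdom M1"
    have "range (h \<circ> v) \<subseteq> sdom M2" using v img by auto
    then have "sat M2 (h \<circ> v) \<phi>" using m2 by (simp add: models_def)
    then show "sat M1 v \<phi>" using iso_sat[OF inj img rel wf v] by simp
  qed
next
  assume m1: "models M1 \<phi>"
  show "models M2 \<phi>" unfolding models_def
  proof (intro allI impI)
    fix w :: "nat \<Rightarrow> _" assume w: "range w \<subseteq> sdom M2"
    define v where "v = inv_into (sdom M1) h \<circ> w"
    have v: "range v \<subseteq> sdom M1" using w img unfolding v_def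
      by (auto intro!: inv_into_into)
    have hv: "h \<circ> v = w" using w img unfolding v_def
      by (auto simp: fun_eq_iff intro!: f_inv_into_f)
    have "sat M1 v \<phi>" using m1 v by (simp add: models_def)
    then show "sat M2 w \<phi>" using iso_sat[OF inj img rel wf v] hv by simp
  qed
qed

lemma iso_Th:
  assumes inj: "inj_on h (sdom M1)" and img: "h ` sdom M1 = sdom M2"
    and rel: "\<And>p xs. p \<in> P \<Longrightarrow> set xs \<subseteq> sdom M1 \<Longrightarrow> (map h xs \<in> sint M2 p) = (xs \<in> sint M1 p)"
  shows "Th ar P M1 = Th ar P M2"
  unfolding Th_def sentence_def using iso_models[OF inj img rel] by blast

lemma agree_models:
  assumes "sdom M1 = sdom M2" "\<And>p. p \<in> P \<Longrightarrow> sint M1 p = sint M2 p" "wf_fm ar P \<phi>"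
  shows "models M1 \<phi> = models M2 \<phi>"
  using iso_models[of id M1 M2 P ar \<phi>] assms by simp

lemma models_sentence:
  assumes "fv \<phi> = {}" "range v \<subseteq> sdom M"
  shows "models M \<phi> = sat M v \<phi>"
proof
  assume "models M \<phi>" then show "sat M v \<phi>" using assms by (simp add: models_def)
next
  assume s: "sat M v \<phi>"
  show "models M \<phi>" unfolding models_def
  proof (intro allI impI)
    fix w :: "nat \<Rightarrow> _" assume "range w \<subseteq> sdom M"
    have "sat M w \<phi> = sat M v \<phi>" by (rule sat_fv) (use assms in auto)
    then show "sat M w \<phi>" using s by simp
  qed
qed

fun updl :: "(nat \<Rightarrow> 'u) \<Rightarrow> nat list \<Rightarrow> 'u list \<Rightarrow> nat \<Rightarrow> 'u" where
  "updl v (x#xs) (a#as) = updl (v(x:=a)) xs as"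
| "updl v _ _ = v"

lemma exs_Cons: "exs (x#xs) \<phi> = Ex x (exs xs \<phi>)" by (simp add: exs_def)
lemma exs_Nil: "exs [] \<phi> = \<phi>" by (simp add: exs_def)
lemma alls_Cons: "alls (x#xs) \<phi> = Neg (Ex x (Neg (alls xs \<phi>)))" by (simp add: alls_def)
lemma alls_Nil: "alls [] \<phi> = \<phi>" by (simp add: alls_def)

lemma sat_exs: "sat M v (exs vs \<phi>) =
   (\<exists>as. length as = length vs \<and> set as \<subseteq> sdom M \<and> sat M (updl v vs as) \<phi>)"
proof (induct vs arbitrary: v)
  case Nil then show ?case by (simp add: exs_Nil)
next
  case (Cons x xs)
  show ?case
  proof
    assume "sat M v (exs (x # xs) \<phi>)"
    then obtain a as where "a \<in> sdom M" "length as = length xs" "set as \<subseteq> sdom M"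
      "sat M (updl (v(x:=a)) xs as) \<phi>" unfolding exs_Cons sat.simps Cons by blast
    then show "\<exists>as. length as = length (x # xs) \<and> set as \<subseteq> sdom M \<and> sat M (updl v (x # xs) as) \<phi>"
      by (intro exI[of _ "a#as"]) simp
  next
    assume "\<exists>as. length as = length (x # xs) \<and> set as \<subseteq> sdom M \<and> sat M (updl v (x # xs) as) \<phi>"
    then obtain as where as: "length as = length (x # xs)" "set as \<subseteq> sdom M" "sat M (updl v (x # xs) as) \<phi>" by blast
    then obtain a as' where aa: "as = a # as'" by (cases as) auto
    have "sat M (updl (v(x:=a)) xs as') \<phi>" using as(3) unfolding aa updl.simps .
    moreover have "a \<in> sdom M" "set as' \<subseteq> sdom M" "length as' = length xs" using as aa by auto
    ultimately show "sat M v (exs (x # xs) \<phi>)" unfolding exs_Cons sat.simps Cons by blast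
  qed
qed

lemma sat_alls: "sat M v (alls vs \<phi>) =
   (\<forall>as. length as = length vs \<and> set as \<subseteq> sdom M \<longrightarrow> sat M (updl v vs as) \<phi>)"
proof (induct vs arbitrary: v)
  case Nil then show ?case by (simp add: alls_Nil)
next
  case (Cons x xs)
  show ?case
  proof
    assume h: "sat M v (alls (x # xs) \<phi>)"
    show "\<forall>as. length as = length (x # xs) \<and> set as \<subseteq> sdom M \<longrightarrow> sat M (updl v (x # xs) as) \<phi>"
    proof (intro allI impI)
      fix as assume as: "length as = length (x # xs) \<and> set as \<subseteq> sdom M"
      then obtain a as' where aa: "as = a # as'" by (cases as) auto
      have "a \<in> sdom M" "set as' \<subseteq> sdom M" "length as' = length xs" using as aa by auto
      then have "sat M (updl (v(x:=a)) xs as') \<phi>" using h unfolding alls_Cons sat.simps Cons by blast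
      then show "sat M (updl v (x # xs) as) \<phi>" unfolding aa updl.simps .
    qed
  next
    assume h: "\<forall>as. length as = length (x # xs) \<and> set as \<subseteq> sdom M \<longrightarrow> sat M (updl v (x # xs) as) \<phi>"
    have "sat M (updl (v(x:=a)) xs as) \<phi>" if "a \<in> sdom M" "length as = length xs" "set as \<subseteq> sdom M" for a as
      using h[rule_format, of "a#as"] that unfolding updl.simps by simp
    then show "sat M v (alls (x # xs) \<phi>)" unfolding alls_Cons sat.simps Cons by blast
  qed
qed

lemma fv_exs: "fv (exs vs \<phi>) = fv \<phi> - set vs" by (induct vs) (auto simp: exs_Nil exs_Cons)
lemma fv_alls: "fv (alls vs \<phi>) = fv \<phi> - set vs" by (induct vs) (auto simp: alls_Nil alls_Cons)
lemma wf_exs: "wf_fm ar \<Sigma> (exs vs \<phi>) = wf_fm ar \<Sigma> \<phi>" by (induct vs) (auto simp: exs_Nil exs_Cons)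
lemma wf_alls: "wf_fm ar \<Sigma> (alls vs \<phi>) = wf_fm ar \<Sigma> \<phi>" by (induct vs) (auto simp: alls_Nil alls_Cons)

lemma updl_other: "y \<notin> set vs \<Longrightarrow> updl v vs as y = v y"
  by (induct v vs as rule: updl.induct) auto

lemma updl_map: "distinct vs \<Longrightarrow> length as = length vs \<Longrightarrow> map (updl v vs as) vs = as"
proof (induct vs arbitrary: v as)
  case Nil then show ?case by simp
next
  case (Cons x xs)
  then obtain a as' where as: "as = a # as'" by (cases as) auto
  have "updl (v(x := a)) xs as' x = a" using Cons.prems by (simp add: updl_other)
  then show ?case using Cons as by simp
qed

lemma updl_range: "range v \<subseteq> A \<Longrightarrow> set as \<subseteq> A \<Longrightarrow> range (updl v vs as) \<subseteq> A"
proof (induct v vs as rule: updl.induct)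
  case (1 v x xs a as)
  have r: "range (v(x:=a)) \<subseteq> A" using 1(2,3) by (auto simp: image_subset_iff)
  have "set as \<subseteq> A" using 1(3) by simp
  from 1(1)[OF r this] show ?case unfolding updl.simps .
qed auto

lemma models_tuple:
  assumes "sdom X \<noteq> {}"
  shows "models X (exs [0..<m] (Rel s [0..<m])) =
     (\<exists>as. length as = m \<and> set as \<subseteq> sdom X \<and> as \<in> sint X s)"
proof -
  obtain a where a: "a \<in> sdom X" using assms by auto
  have r: "range (\<lambda>_. a) \<subseteq> sdom X" using a by auto
  have "models X (exs [0..<m] (Rel s [0..<m])) = sat X (\<lambda>_. a) (exs [0..<m] (Rel s [0..<m]))"
    by (rule models_sentence[OF _ r]) (simp add: fv_exs)
  also have "\<dots> = (\<exists>as. length as = m \<and> set as \<subseteq> sdom X \<and> as \<in> sint X s)"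
    by (auto simp: sat_exs updl_map)
  finally show ?thesis .
qed


definition str :: "('s,'u) struc \<Rightarrow> 's set \<Rightarrow> 's set \<Rightarrow> ('s,'u) struc" where
  "str N K X = \<lparr>sdom = sdom N, sint = (\<lambda>p. if p \<in> K - X then {} else sint N p)\<rparr>"

fun kill :: "'p set \<Rightarrow> 'p fm \<Rightarrow> 'p fm" where
  "kill D (Eq x y) = Eq x y"
| "kill D (Rel p xs) = (if p \<in> D then Ex 0 (Neg (Eq 0 0)) else Rel p xs)"
| "kill D (Neg \<phi>) = Neg (kill D \<phi>)"
| "kill D (Conj \<phi> \<psi>) = Conj (kill D \<phi>) (kill D \<psi>)"
| "kill D (Ex x \<phi>) = Ex x (kill D \<phi>)"

lemma fv_kill: "fv (kill D \<phi>) \<subseteq> fv \<phi>" by (induct \<phi>) auto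
lemma wf_kill: "wf_fm ar \<Sigma> \<phi> \<Longrightarrow> wf_fm ar (\<Sigma> - D) (kill D \<phi>)" by (induct \<phi>) auto

lemma sat_kill:
  assumes D: "\<forall>p\<in>D. \<forall>xs. length xs = ar p \<and> set xs \<subseteq> sdom M \<longrightarrow> xs \<notin> sint M p"
  shows "wf_fm ar \<Sigma> \<phi> \<Longrightarrow> range (v::nat\<Rightarrow>_) \<subseteq> sdom M \<Longrightarrow> sat M v (kill D \<phi>) = sat M v \<phi>"
proof (induct \<phi> arbitrary: v)
  case (Rel p xs)
  show ?case
  proof (cases "p \<in> D")
    case True
    have "set (map v xs) \<subseteq> sdom M" using Rel.prems(2) by auto
    then have "map v xs \<notin> sint M p" using D True Rel.prems(1) by auto
    then show ?thesis using True by simp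
  qed simp
next
  case (Ex x \<phi>)
  have "sat M (v(x:=a)) (kill D \<phi>) = sat M (v(x:=a)) \<phi>" if "a \<in> sdom M" for a
    by (rule Ex.hyps) (use Ex.prems that in \<open>auto simp: image_subset_iff\<close>)
  then show ?case by simp
qed auto

definition sig :: "('s \<Rightarrow> nat) \<Rightarrow> 's \<Rightarrow> 's fm" where
  "sig ar s = exs [0..<ar s] (Rel s [0..<ar s])"

abbreviation II' :: "('s,'u) struc \<Rightarrow> ('s \<Rightarrow> nat) \<Rightarrow> 's set \<Rightarrow> 's fm set \<Rightarrow> nat \<Rightarrow> 's set" where
  "II' N ar \<Sigma> T n \<equiv> I0 TYPE('u) ar \<Sigma> T n"
abbreviation SS' :: "('s,'u) struc \<Rightarrow> ('s \<Rightarrow> nat) \<Rightarrow> 's set \<Rightarrow> 's fm set \<Rightarrow> nat \<Rightarrow> 's set" where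
  "SS' N ar \<Sigma> T n \<equiv> Sigma' TYPE('u) ar \<Sigma> T n"
abbreviation TT' :: "('s,'u) struc \<Rightarrow> ('s \<Rightarrow> nat) \<Rightarrow> 's set \<Rightarrow> 's fm set \<Rightarrow> nat \<Rightarrow> 's set \<Rightarrow> 's fm set" where
  "TT' N ar \<Sigma> T n X \<equiv> TI TYPE('u) ar \<Sigma> T n X"

locale setting =
  fixes ar :: "'s \<Rightarrow> nat" and \<Sigma>0 :: "'s set" and T0 :: "'s fm set" and n :: nat
    and N0 :: "('s,'u) struc"
  assumes N0_struct: "is_struct ar \<Sigma>0 N0"
    and N0_models: "\<forall>\<psi>\<in>T0. models N0 \<psi>"
    and T0_compl: "\<forall>\<phi>. sentence ar \<Sigma>0 \<phi> \<longrightarrow> \<phi> \<in> T0 \<or> Neg \<phi> \<in> T0"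
    and n_pos: "n \<ge> 1"
begin

abbreviation "II \<equiv> II' N0 ar \<Sigma>0 T0 n"
abbreviation "SS \<equiv> SS' N0 ar \<Sigma>0 T0 n"
abbreviation "TT X \<equiv> TT' N0 ar \<Sigma>0 T0 n X"
abbreviation "st X \<equiv> str N0 II X"

lemma II_props: "p \<in> II \<Longrightarrow> p \<in> \<Sigma>0 \<and> ar p = n \<and> nonempty_sym TYPE('u) ar \<Sigma>0 T0 p"
  by (simp add: I0_def)

lemma SS_sub: "SS \<subseteq> \<Sigma>0" by (auto simp: Sigma'_def I0_def)

lemma II_SS: "II \<subseteq> SS" by (auto simp: Sigma'_def)

lemma N0_dom: "sdom N0 \<noteq> {}" using N0_struct by (simp add: is_struct_def)

lemma N0_sentence: assumes "sentence ar \<Sigma>0 \<phi>" "models N0 \<phi>" shows "\<phi> \<in> T0"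
proof (rule ccontr)
  assume "\<phi> \<notin> T0"
  then have "Neg \<phi> \<in> T0" using T0_compl assms(1) by blast
  then have m: "models N0 (Neg \<phi>)" using N0_models by blast
  obtain a where a: "a \<in> sdom N0" using N0_dom by auto
  have r: "range (\<lambda>_::nat. a) \<subseteq> sdom N0" using a by auto
  have "sat N0 (\<lambda>_. a) \<phi>" using assms(2) r by (simp add: models_def)
  moreover have "sat N0 (\<lambda>_. a) (Neg \<phi>)" using m r by (simp add: models_def)
  ultimately show False by simp
qed

lemma st_struct: "is_struct ar SS (st X)"
  using N0_struct SS_sub by (auto simp: is_struct_def str_def)

lemma TI_str:
  assumes XI: "X \<subseteq> II"
  shows "TT X = Th ar SS (st X)"
proof -
  define L where "L = X \<union> {R \<in> \<Sigma>0. ar R \<noteq> n}"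
  define Ax where "Ax = {\<psi> \<in> T0. sentence ar L \<psi>}
               \<union> {alls [0..<ar l] (Neg (Rel l [0..<ar l])) | l. l \<in> II - X}"
  have TT: "TT X = {\<phi>. sentence ar SS \<phi> \<and> entails TYPE('u) ar SS Ax \<phi>}"
    unfolding TI_def Let_def L_def Ax_def by simp
  define D where "D = II - X"
  have L_sub: "L \<subseteq> \<Sigma>0" using XI by (auto simp: L_def I0_def)
  have agreeL: "sint (st X) p = sint N0 p" if "p \<in> L" for p
    using that by (auto simp: str_def L_def I0_def)
  have stL: "models (st X) \<psi> = models N0 \<psi>" if "wf_fm ar L \<psi>" for \<psi>
    by (rule agree_models[OF _ agreeL that]) (auto simp: str_def)
  have st_dom: "sdom (st X) = sdom N0" by (simp add: str_def)
  show ?thesis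
  proof (intro equalityI subsetI)
    fix \<phi> assume "\<phi> \<in> TT X"
    then have s: "sentence ar SS \<phi>" and e: "entails TYPE('u) ar SS Ax \<phi>" using TT by auto
    have ax: "models (st X) \<psi>" if "\<psi> \<in> Ax" for \<psi>
    proof -
      { assume "\<psi> \<in> T0" "sentence ar L \<psi>"
        then have ?thesis using stL N0_models by (auto simp: sentence_def) }
      moreover
      { fix l assume l: "l \<in> II - X" "\<psi> = alls [0..<ar l] (Neg (Rel l [0..<ar l]))"
        then have "sint (st X) l = {}" by (simp add: str_def)
        then have ?thesis using l by (simp add: models_def sat_alls) }
      ultimately show ?thesis using that unfolding Ax_def by blast
    qed
    have "models (st X) \<phi>" using e st_struct ax unfolding entails_def by blast
    then show "\<phi> \<in> Th ar SS (st X)" using s by (simp add: Th_def)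
  next
    fix \<phi> assume "\<phi> \<in> Th ar SS (st X)"
    then have s: "sentence ar SS \<phi>" and m: "models (st X) \<phi>" by (auto simp: Th_def)
    define \<phi>' where "\<phi>' = kill D \<phi>"
    have wfS: "wf_fm ar SS \<phi>" using s by (simp add: sentence_def)
    have "wf_fm ar (SS - D) \<phi>'" unfolding \<phi>'_def by (rule wf_kill[OF wfS])
    moreover have "SS - D \<subseteq> L" using XI by (auto simp: Sigma'_def D_def L_def I0_def)
    ultimately have wfL: "wf_fm ar L \<phi>'" by (rule wf_mono)
    have fv': "fv \<phi>' = {}" using fv_kill[of D \<phi>] s by (auto simp: sentence_def \<phi>'_def)
    have sL: "sentence ar L \<phi>'" using wfL fv' by (simp add: sentence_def)
    have Dst: "\<forall>p\<in>D. \<forall>xs. length xs = ar p \<and> set xs \<subseteq> sdom (st X) \<longrightarrow> xs \<notin> sint (st X) p"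
      by (auto simp: D_def str_def)
    have "models (st X) \<phi>'"
      unfolding models_def \<phi>'_def
      using sat_kill[OF Dst wfS] m by (simp add: models_def)
    then have "models N0 \<phi>'" using stL[OF wfL] by simp
    moreover have "sentence ar \<Sigma>0 \<phi>'" using sL L_sub wf_mono by (auto simp: sentence_def)
    ultimately have "\<phi>' \<in> T0" using N0_sentence by blast
    then have inAx: "\<phi>' \<in> Ax" using sL by (simp add: Ax_def)
    have "entails TYPE('u) ar SS Ax \<phi>"
      unfolding entails_def
    proof (intro allI impI)
      fix M :: "('s,'u) struc" assume M: "is_struct ar SS M \<and> (\<forall>\<psi>\<in>Ax. models M \<psi>)"
      have mM: "models M \<phi>'" using M inAx by blast
      obtain a where a: "a \<in> sdom M" using M by (auto simp: is_struct_def)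
      have DM: "\<forall>p\<in>D. \<forall>xs. length xs = ar p \<and> set xs \<subseteq> sdom M \<longrightarrow> xs \<notin> sint M p"
      proof (intro ballI allI impI)
        fix p xs assume p: "p \<in> D" and xs: "length xs = ar p \<and> set xs \<subseteq> sdom M"
        have "alls [0..<ar p] (Neg (Rel p [0..<ar p])) \<in> Ax" using p by (auto simp: Ax_def D_def)
        then have "models M (alls [0..<ar p] (Neg (Rel p [0..<ar p])))" using M by blast
        then have "sat M (\<lambda>_. a) (alls [0..<ar p] (Neg (Rel p [0..<ar p])))"
          using a by (auto simp: models_def)
        then have "\<not> sat M (updl (\<lambda>_. a) [0..<ar p] xs) (Rel p [0..<ar p])"
          using xs by (simp add: sat_alls)
        then show "xs \<notin> sint M p" using xs by (simp add: updl_map)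
      qed
      show "models M \<phi>"
        unfolding models_def
      proof (intro allI impI)
        fix v :: "nat \<Rightarrow> 'u" assume v: "range v \<subseteq> sdom M"
        have "sat M v \<phi>'" using mM v by (simp add: models_def)
        then show "sat M v \<phi>" using sat_kill[OF DM wfS v] by (simp add: \<phi>'_def)
      qed
    qed
    then show "\<phi> \<in> TT X" using s TT by simp
  qed
qed

lemma sig_sentence: "s \<in> II \<Longrightarrow> sentence ar SS (sig ar s)"
  using II_SS by (auto simp: sentence_def sig_def wf_exs fv_exs)

lemma N0_sig: assumes "s \<in> II" shows "models N0 (sig ar s)"
proof -
  have "entails TYPE('u) ar \<Sigma>0 T0 (sig ar s)"
    using conjunct2[OF conjunct2[OF II_props[OF assms]]] unfolding nonempty_sym_def sig_def .
  then show ?thesis using N0_struct N0_models by (simp add: entails_def)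
qed

lemma st_sig: assumes s: "s \<in> II" shows "models (st X) (sig ar s) = (s \<in> X)"
proof -
  have d: "sdom (st X) \<noteq> {}" using N0_dom by (simp add: str_def)
  have "models (st X) (sig ar s) = (\<exists>as. length as = ar s \<and> set as \<subseteq> sdom (st X) \<and> as \<in> sint (st X) s)"
    unfolding sig_def by (rule models_tuple[OF d])
  moreover have "models N0 (sig ar s) = (\<exists>as. length as = ar s \<and> set as \<subseteq> sdom N0 \<and> as \<in> sint N0 s)"
    unfolding sig_def by (rule models_tuple[OF N0_dom])
  ultimately show ?thesis using N0_sig[OF s] s by (auto simp: str_def)
qed

lemma Th_sig:
  assumes "Th ar SS A = TT I" "I \<subseteq> II" "s \<in> II"
  shows "models A (sig ar s) = (s \<in> I)"
proof -
  have "models A (sig ar s) = (sig ar s \<in> Th ar SS A)"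
    using sig_sentence[OF assms(3)] by (simp add: Th_def)
  also have "\<dots> = (sig ar s \<in> Th ar SS (st I))" using assms(1) TI_str[OF assms(2)] by simp
  also have "\<dots> = models (st I) (sig ar s)" using sig_sentence[OF assms(3)] by (simp add: Th_def)
  also have "\<dots> = (s \<in> I)" by (rule st_sig[OF assms(3)])
  finally show ?thesis .
qed

end

fun conjs :: "'p fm list \<Rightarrow> 'p fm" where
  "conjs [] = Eq 0 0" | "conjs (f # fs) = Conj f (conjs fs)"

lemma sat_conjs: "sat M v (conjs fs) = (\<forall>f\<in>set fs. sat M v f)"
  by (induct fs) auto

lemma fv_conjs: "fv (conjs fs) \<subseteq> {0} \<union> \<Union>(fv ` set fs)"
  by (induct fs) auto

lemma wf_conjs: "wf_fm ar \<Sigma> (conjs fs) = (\<forall>f\<in>set fs. wf_fm ar \<Sigma> f)"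
  by (induct fs) auto

definition thetaG :: "nat list \<Rightarrow> 'p \<Rightarrow> 'p option fm" where
  "thetaG vs s = exs vs (Conj (conjs (map (\<lambda>i. Rel None [0,i]) vs)) (Rel (Some s) vs))"

definition theta :: "nat \<Rightarrow> 'p \<Rightarrow> 'p option fm" where
  "theta n s = thetaG [1..<n+1] s"

lemma sat_thetaG:
  assumes d: "distinct vs" and z: "0 \<notin> set vs"
  shows "sat X v (thetaG vs s) =
  (\<exists>as. length as = length vs \<and> set as \<subseteq> sdom X \<and> (\<forall>b\<in>set as. [v 0, b] \<in> sint X None) \<and> as \<in> sint X (Some s))"
proof -
  have key: "sat X (updl v vs as) (Conj (conjs (map (\<lambda>i. Rel None [0,i]) vs)) (Rel (Some s) vs))
     = ((\<forall>b\<in>set as. [v 0, b] \<in> sint X None) \<and> as \<in> sint X (Some s))"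
    if l: "length as = length vs" for as
  proof -
    let ?w = "updl v vs as"
    have m: "map ?w vs = as" using l d by (simp add: updl_map)
    have w0: "?w 0 = v 0" using z by (simp add: updl_other)
    have "(\<forall>i\<in>set vs. [?w 0, ?w i] \<in> sint X None) = (\<forall>b\<in>set (map ?w vs). [?w 0, b] \<in> sint X None)"
      by simp
    then have "(\<forall>i\<in>set vs. [?w 0, ?w i] \<in> sint X None) = (\<forall>b\<in>set as. [v 0, b] \<in> sint X None)"
      unfolding m w0 .
    moreover have "(map ?w vs \<in> sint X (Some s)) = (as \<in> sint X (Some s))" unfolding m ..
    ultimately show ?thesis by (simp add: sat_conjs)
  qed
  show ?thesis unfolding thetaG_def sat_exs using key by auto
qed

lemma sat_theta: "sat X v (theta n s) =
  (\<exists>as. length as = n \<and> set as \<subseteq> sdom X \<and> (\<forall>b\<in>set as. [v 0, b] \<in> sint X None) \<and> as \<in> sint X (Some s))"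
proof -
  have "distinct [1..<n+1]" "0 \<notin> set [1..<n+1]" "length [1..<n+1] = n" by auto
  then show ?thesis unfolding theta_def using sat_thetaG by metis
qed

lemma fv_thetaG: "fv (thetaG vs s) \<subseteq> {0}"
proof -
  have "fv (conjs (map (\<lambda>i. Rel None [0,i]) vs)) \<subseteq> {0} \<union> set vs"
  proof -
    have "\<Union>(fv ` set (map (\<lambda>i. Rel None [0,i]) vs)) \<subseteq> {0} \<union> set vs" by auto
    then show ?thesis using fv_conjs[of "map (\<lambda>i. Rel None [0,i]) vs"] by blast
  qed
  then show ?thesis unfolding thetaG_def fv_exs by auto
qed

lemma fv_theta: "fv (theta n s) \<subseteq> {0}"
  unfolding theta_def by (rule fv_thetaG)

lemma wf_theta_gen: "Some s \<in> \<Sigma> \<Longrightarrow> None \<in> \<Sigma> \<Longrightarrow> ar' (Some s) = n \<Longrightarrow> ar' None = 2 \<Longrightarrow>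
   wf_fm ar' \<Sigma> (theta n s)"
proof -
  assume a: "Some s \<in> \<Sigma>" "None \<in> \<Sigma>" "ar' (Some s) = n" "ar' None = 2"
  have "length [1..<n+1] = n" by simp
  then show ?thesis using a unfolding theta_def thetaG_def wf_exs
    by (simp add: wf_conjs)
qed

lemma Th_nonempty:
  assumes "Th ar P X = Th ar P Y" "sdom Y \<noteq> {}"
  shows "sdom X \<noteq> {}"
proof
  assume e: "sdom X = {}"
  let ?f = "Ex 0 (Neg (Eq 0 0)) :: 'a fm"
  have s: "sentence ar P ?f" by (simp add: sentence_def)
  have "models X ?f" using e by (auto simp: models_def)
  then have "?f \<in> Th ar P X" using s by (simp add: Th_def)
  then have "?f \<in> Th ar P Y" using assms(1) by simp
  then have "models Y ?f" by (simp add: Th_def)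
  moreover obtain a where "a \<in> sdom Y" using assms(2) by auto
  ultimately show False by (auto simp: models_def)
qed

context setting
begin

lemma forward:
  assumes Fsub: "\<forall>I\<in>F. I \<subseteq> II" and JI: "J \<subseteq> II"
    and cl: "TT J \<in> ClE TYPE('u) ar SS (TT ` F)"
    and S: "finite S" "S \<subseteq> II"
  shows "\<exists>I\<in>F. I \<inter> S = J \<inter> S"
proof (rule ccontr)
  assume nex: "\<not> (\<exists>I\<in>F. I \<inter> S = J \<inter> S)"
  obtain M :: "('s option, 'u) struc" and C where
    TJ: "TT J = Th ar SS (induced M C)" and
    P1: "\<exists>\<A> :: ('s, 'u) struc set.
            \<A> \<noteq> {}
          \<and> (\<forall>A\<in>\<A>. is_struct ar SS A \<and> Th ar SS A \<in> TT ` F)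
          \<and> pairwise (\<lambda>A B. sdom A \<inter> sdom B = {}) \<A>
          \<and> is_struct (arE ar) (SigE SS) M
          \<and> Th (arE ar) (SigE SS) M = Th (arE ar) (SigE SS) (Ecomb \<A>)" and
    P2: "\<exists>a\<in>sdom M. C = {b \<in> sdom M. [a, b] \<in> sint M None}"
    using cl unfolding ClE_def mem_Collect_eq by (elim exE conjE) blast
  obtain \<A> :: "('s, 'u) struc set" where
    Ane: "\<A> \<noteq> {}" and
    Astr: "\<forall>A\<in>\<A>. is_struct ar SS A \<and> Th ar SS A \<in> TT ` F" and
    disj: "pairwise (\<lambda>A B. sdom A \<inter> sdom B = {}) \<A>" and
    Mstr: "is_struct (arE ar) (SigE SS) M" and
    ThM: "Th (arE ar) (SigE SS) M = Th (arE ar) (SigE SS) (Ecomb \<A>)"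
    using P1 by (elim exE conjE) blast
  obtain a where a: "a \<in> sdom M" and Cdef: "C = {b \<in> sdom M. [a, b] \<in> sint M None}"
    using P2 by blast
  obtain ss where ss: "set ss = S" using finite_list[OF S(1)] by blast
  define pat where "pat = conjs (map (\<lambda>s. if s \<in> J then theta n s else Neg (theta n s)) ss)"
  define chi where "chi = Neg (Ex 0 pat)"
  have sat_pat: "sat X v pat = (\<forall>s\<in>S. sat X v (theta n s) = (s \<in> J))" for X :: "('s option, 'u) struc" and v
  proof -
    let ?g = "\<lambda>s. if s \<in> J then theta n s else Neg (theta n s)"
    have e: "sat X v (?g s) = (sat X v (theta n s) = (s \<in> J))" for s by auto
    have "sat X v pat = (\<forall>f\<in>set (map ?g ss). sat X v f)" unfolding pat_def sat_conjs ..
    also have "\<dots> = (\<forall>s\<in>set ss. sat X v (?g s))" by (simp only: set_map ball_simps)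
    also have "\<dots> = (\<forall>s\<in>S. sat X v (theta n s) = (s \<in> J))" unfolding e ss ..
    finally show ?thesis .
  qed
  have wf_theta: "wf_fm (arE ar) (SigE SS) (theta n s)" if "s \<in> II" for s
    by (rule wf_theta_gen) (use that II_props[OF that] II_SS in \<open>auto simp: SigE_def arE_def\<close>)
  have chi_sent: "sentence (arE ar) (SigE SS) chi"
  proof -
    have "wf_fm (arE ar) (SigE SS) pat" unfolding pat_def wf_conjs using ss S(2) wf_theta by auto
    moreover have "fv pat \<subseteq> {0}"
      using fv_conjs[of "map (\<lambda>s. if s \<in> J then theta n s else Neg (theta n s)) ss"] fv_theta
      unfolding pat_def by fastforce
    ultimately show ?thesis by (auto simp: sentence_def chi_def)
  qed
  \<comment> \<open>the E-combination satisfies chi\<close>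
  have Ecomb_theta: "sat (Ecomb \<A>) v (theta n s) = models A (sig ar s)"
    if A: "A \<in> \<A>" and va: "v 0 \<in> sdom A" and s: "s \<in> II" for A v s
  proof -
    have As: "is_struct ar SS A" using Astr A by blast
    have Ad: "sdom A \<noteq> {}" using As by (simp add: is_struct_def)
    have ars: "ar s = n" using II_props[OF s] by simp
    have sSS: "s \<in> SS" using s II_SS by blast
    have uniq: "A' = A" if "A' \<in> \<A>" "x \<in> sdom A'" "x \<in> sdom A" for A' x
      using disj that A unfolding pairwise_def by blast
    have "models A (sig ar s) = (\<exists>as. length as = n \<and> set as \<subseteq> sdom A \<and> as \<in> sint A s)"
      unfolding sig_def ars by (rule models_tuple[OF Ad])
    also have "\<dots> = sat (Ecomb \<A>) v (theta n s)"
    proof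
      assume "\<exists>as. length as = n \<and> set as \<subseteq> sdom A \<and> as \<in> sint A s"
      then obtain as where as: "length as = n" "set as \<subseteq> sdom A" "as \<in> sint A s" by blast
      show "sat (Ecomb \<A>) v (theta n s)" unfolding sat_theta
        using as A va by (auto simp: Ecomb_def intro!: exI[of _ as])
    next
      assume "sat (Ecomb \<A>) v (theta n s)"
      then obtain as where as: "length as = n" "set as \<subseteq> sdom (Ecomb \<A>)"
        "\<forall>b\<in>set as. [v 0, b] \<in> sint (Ecomb \<A>) None" "as \<in> sint (Ecomb \<A>) (Some s)"
        unfolding sat_theta by blast
      obtain B where B: "B \<in> \<A>" "as \<in> sint B s" using as(4) by (auto simp: Ecomb_def)
      have "is_struct ar SS B" using B Astr by blast
      then have "sint B s \<subseteq> {xs. length xs = ar s \<and> set xs \<subseteq> sdom B}" using sSS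
        unfolding is_struct_def by blast
      then have Bs: "set as \<subseteq> sdom B" using B(2) by blast
      obtain b where b: "b \<in> set as" using as(1) n_pos by (cases as) auto
      obtain A' where A': "A' \<in> \<A>" "v 0 \<in> sdom A'" "b \<in> sdom A'"
        using as(3) b by (auto simp: Ecomb_def)
      have "A' = A" using uniq A' va by blast
      moreover have "B = A'" using disj A' B b Bs unfolding pairwise_def by blast
      ultimately have "B = A" by simp
      then show "\<exists>as. length as = n \<and> set as \<subseteq> sdom A \<and> as \<in> sint A s"
        using as(1) Bs B by blast
    qed
    finally show ?thesis by simp
  qed
  have "models (Ecomb \<A>) chi"
    unfolding models_def
  proof (intro allI impI)
    fix v :: "nat \<Rightarrow> 'u" assume "range v \<subseteq> sdom (Ecomb \<A>)"
    show "sat (Ecomb \<A>) v chi"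
    proof (rule ccontr)
      assume "\<not> sat (Ecomb \<A>) v chi"
      then obtain x where x: "x \<in> sdom (Ecomb \<A>)" "sat (Ecomb \<A>) (v(0:=x)) pat"
        by (auto simp: chi_def)
      obtain A where A: "A \<in> \<A>" "x \<in> sdom A" using x(1) by (auto simp: Ecomb_def)
      obtain I where I: "I \<in> F" "Th ar SS A = TT I" using Astr A by blast
      have IS: "I \<inter> S = J \<inter> S"
      proof -
        have "s \<in> I \<longleftrightarrow> s \<in> J" if "s \<in> S" for s
        proof -
          have sII: "s \<in> II" using that S(2) by blast
          have "sat (Ecomb \<A>) (v(0:=x)) (theta n s) = (s \<in> J)" using x(2) sat_pat that by blast
          moreover have "sat (Ecomb \<A>) (v(0:=x)) (theta n s) = models A (sig ar s)"
            by (rule Ecomb_theta[OF A(1)]) (use A sII in auto)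
          moreover have "models A (sig ar s) = (s \<in> I)"
            by (rule Th_sig[OF I(2) _ sII]) (use Fsub I in auto)
          ultimately show ?thesis by simp
        qed
        then show ?thesis by blast
      qed
      then show False using nex I by blast
    qed
  qed
  then have "chi \<in> Th (arE ar) (SigE SS) (Ecomb \<A>)" using chi_sent by (simp add: Th_def)
  then have "chi \<in> Th (arE ar) (SigE SS) M" using ThM by simp
  then have mM: "models M chi" by (simp add: Th_def)
  \<comment> \<open>but the class C violates chi\<close>
  have Cne0: "sdom (induced M C) \<noteq> {}"
  proof (rule Th_nonempty)
    show "Th ar SS (induced M C) = Th ar SS (st J)" using TJ TI_str[OF JI] by simp
    show "sdom (st J) \<noteq> {}" using N0_dom by (simp add: str_def)
  qed
  then have Cne: "C \<noteq> {}" by (simp add: induced_def)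
  have CM: "C \<subseteq> sdom M" using Cdef by blast
  have M_theta: "sat M w (theta n s) = (s \<in> J)" if w0: "w 0 = a" and s: "s \<in> II" for w s
  proof -
    have ars: "ar s = n" using II_props[OF s] by simp
    have "sat M w (theta n s) = (\<exists>as. length as = n \<and> set as \<subseteq> sdom (induced M C) \<and> as \<in> sint (induced M C) s)"
      unfolding sat_theta w0 by (auto simp: induced_def Cdef)
    also have "\<dots> = models (induced M C) (sig ar s)"
      unfolding sig_def ars by (rule models_tuple[symmetric]) (use Cne in \<open>simp add: induced_def\<close>)
    also have "\<dots> = (s \<in> J)" by (rule Th_sig[OF TJ[symmetric] JI s])
    finally show ?thesis .
  qed
  have "range (\<lambda>_::nat. a) \<subseteq> sdom M" using a by auto
  then have "sat M (\<lambda>_. a) chi" using mM by (simp add: models_def)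
  moreover have "sat M ((\<lambda>_. a)(0:=a)) pat"
    unfolding sat_pat using M_theta S(2) by auto
  ultimately show False using a by (auto simp: chi_def)
qed

end

lemma topo:
  fixes F :: "'s set set"
  assumes chain: "\<forall>I1\<in>F. \<forall>I2\<in>F. I1 \<subseteq> I2 \<or> I2 \<subseteq> I1"
    and Finf: "infinite F" and JnF: "J \<notin> F" and Jne: "J \<noteq> {}"
    and P: "\<And>S. finite S \<Longrightarrow> \<exists>I\<in>F. I \<inter> S = J \<inter> S"
  shows "\<exists>F'\<subseteq>F. infinite F' \<and> ((J = \<Union>F' \<and> J \<notin> F') \<or> (J = \<Inter>F' \<and> J \<notin> F'))"
proof (cases "\<exists>y. y \<notin> J \<and> (\<forall>I\<in>F. J \<subseteq> I \<longrightarrow> y \<in> I)")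
  case True
  then obtain y where y: "y \<notin> J" "\<forall>I\<in>F. J \<subseteq> I \<longrightarrow> y \<in> I" by blast
  define A where "A = {I\<in>F. \<not> J \<subseteq> I}"
  have U1: "\<Union>A \<subseteq> J"
  proof
    fix w assume "w \<in> \<Union>A"
    then obtain I1 where I1: "I1 \<in> F" "\<not> J \<subseteq> I1" "w \<in> I1" by (auto simp: A_def)
    then obtain x where x: "x \<in> J" "x \<notin> I1" by blast
    show "w \<in> J"
    proof (rule ccontr)
      assume w: "w \<notin> J"
      obtain I where I: "I \<in> F" "I \<inter> {x, w} = J \<inter> {x, w}" using P[of "{x,w}"] by auto
      have "x \<in> I" "w \<notin> I" using I(2) x w by blast+
      then show False using chain I(1) I1 x by blast
    qed
  qed
  have U2: "J \<subseteq> \<Union>A"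
  proof
    fix z assume z: "z \<in> J"
    obtain I where I: "I \<in> F" "I \<inter> {z, y} = J \<inter> {z, y}" using P[of "{z,y}"] by auto
    have "z \<in> I" "y \<notin> I" using I(2) z y(1) by blast+
    then have "I \<in> A" using I(1) y(2) by (auto simp: A_def)
    then show "z \<in> \<Union>A" using \<open>z \<in> I\<close> by blast
  qed
  have Ainf: "infinite A"
  proof
    assume fin: "finite A"
    have "A \<noteq> {}" using U2 Jne by auto
    moreover have "subset.chain F A" using chain by (auto simp: subset_chain_def A_def)
    ultimately have "\<Union>A \<in> A" using Union_in_chain fin by blast
    then show False using U1 U2 JnF by (auto simp: A_def)
  qed
  have "J \<notin> A" using JnF by (auto simp: A_def)
  then show ?thesis using U1 U2 Ainf by (intro exI[of _ A]) (auto simp: A_def)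
next
  case False
  then have y: "\<And>y. y \<notin> J \<Longrightarrow> \<exists>I\<in>F. J \<subseteq> I \<and> y \<notin> I" by blast
  define B where "B = {I\<in>F. J \<subseteq> I}"
  show ?thesis
  proof (cases "B = {}")
    case True
    then have JU: "J = UNIV" using y by (auto simp: B_def)
    have "J = \<Union>F"
    proof
      show "J \<subseteq> \<Union>F"
      proof
        fix z assume "z \<in> J"
        obtain I where I: "I \<in> F" "I \<inter> {z} = J \<inter> {z}" using P[of "{z}"] by auto
        then show "z \<in> \<Union>F" using \<open>z \<in> J\<close> by blast
      qed
    qed (use JU in auto)
    then show ?thesis using Finf JnF by blast
  next
    case Bne: False
    have I1: "\<Inter>B = J"
    proof
      show "\<Inter>B \<subseteq> J" using y by (auto simp: B_def)
    qed (auto simp: B_def)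
    have Binf: "infinite B"
    proof
      assume fin: "finite B"
      have "subset.chain F B" using chain by (auto simp: subset_chain_def B_def)
      then have "\<Inter>B \<in> B" using Inter_in_chain fin Bne by blast
      then show False using I1 JnF by (auto simp: B_def)
    qed
    have "J \<notin> B" using JnF by (auto simp: B_def)
    then show ?thesis using I1 Binf by (intro exI[of _ B]) (auto simp: B_def)
  qed
qed


definition cp :: "(('d \<times> 'u) \<Rightarrow> 'u) \<Rightarrow> 'd \<Rightarrow> ('p,'u) struc \<Rightarrow> ('p,'u) struc" where
  "cp g d A = \<lparr>sdom = (\<lambda>x. g (d,x)) ` sdom A, sint = (\<lambda>p. map (\<lambda>x. g (d,x)) ` sint A p)\<rparr>"

definition fam :: "(('d \<times> 'u) \<Rightarrow> 'u) \<Rightarrow> 'd set \<Rightarrow> ('d \<Rightarrow> ('p,'u) struc) \<Rightarrow> ('p,'u) struc set" where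
  "fam g D Y = (\<lambda>d. cp g d (Y d)) ` D"

lemma map_g_eq: "inj g \<Longrightarrow> (map g ps = map (\<lambda>x. g (d,x)) zs) = ((\<forall>q\<in>set ps. fst q = d) \<and> zs = map snd ps)"
proof (induct ps arbitrary: zs)
  case Nil then show ?case by auto
next
  case (Cons q ps)
  show ?case
  proof (cases zs)
    case Nil then show ?thesis by simp
  next
    case (Cons z zs')
    have "(g q = g (d, z)) = (q = (d, z))" using \<open>inj g\<close> by (simp add: inj_eq)
    then show ?thesis using Cons.hyps[OF \<open>inj g\<close>, of zs'] Cons by (cases q) auto
  qed
qed

lemma lists_decomp: "set xs \<subseteq> g ` A \<Longrightarrow> \<exists>ps. set ps \<subseteq> A \<and> xs = map g ps"
proof (induct xs)
  case Nil then show ?case by simp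
next
  case (Cons x xs)
  then obtain ps where ps: "set ps \<subseteq> A" "xs = map g ps" by auto
  obtain q where q: "q \<in> A" "x = g q" using Cons.prems by auto
  show ?case using ps q by (intro exI[of _ "q#ps"]) auto
qed

lemma Ecomb_fam_dom: "sdom (Ecomb (fam g D Y)) = (\<Union>d\<in>D. (\<lambda>x. g (d,x)) ` sdom (Y d))"
  by (auto simp: Ecomb_def fam_def cp_def)

lemma Ecomb_fam_Some:
  assumes g: "inj g"
  shows "(map g ps \<in> sint (Ecomb (fam g D Y)) (Some p)) =
     (\<exists>d\<in>D. (\<forall>q\<in>set ps. fst q = d) \<and> map snd ps \<in> sint (Y d) p)"
proof -
  have "(map g ps \<in> sint (Ecomb (fam g D Y)) (Some p)) =
     (\<exists>d\<in>D. \<exists>zs\<in>sint (Y d) p. map g ps = map (\<lambda>x. g (d,x)) zs)"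
    by (auto simp: Ecomb_def fam_def cp_def)
  also have "\<dots> = (\<exists>d\<in>D. (\<forall>q\<in>set ps. fst q = d) \<and> map snd ps \<in> sint (Y d) p)"
  proof (rule bex_cong[OF refl])
    fix d
    show "(\<exists>zs\<in>sint (Y d) p. map g ps = map (\<lambda>x. g (d,x)) zs) = ((\<forall>q\<in>set ps. fst q = d) \<and> map snd ps \<in> sint (Y d) p)"
      unfolding map_g_eq[OF g] by blast
  qed
  finally show ?thesis .
qed

lemma Ecomb_fam_None:
  assumes g: "inj g"
  shows "(map g ps \<in> sint (Ecomb (fam g D Y)) None) =
     (length ps = 2 \<and> (\<exists>d\<in>D. \<forall>q\<in>set ps. fst q = d \<and> snd q \<in> sdom (Y d)))"
proof -
  have mem: "(g q \<in> sdom (cp g d (Y d))) = (fst q = d \<and> snd q \<in> sdom (Y d))" for q d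
  proof -
    have "(g q \<in> sdom (cp g d (Y d))) = (\<exists>x\<in>sdom (Y d). g q = g (d,x))" by (auto simp: cp_def)
    also have "\<dots> = (\<exists>x\<in>sdom (Y d). q = (d,x))" using g by (simp add: inj_eq)
    also have "\<dots> = (fst q = d \<and> snd q \<in> sdom (Y d))" by (cases q) auto
    finally show ?thesis .
  qed
  have "(map g ps \<in> sint (Ecomb (fam g D Y)) None) =
     (\<exists>q1 q2. ps = [q1,q2] \<and> (\<exists>d\<in>D. g q1 \<in> sdom (cp g d (Y d)) \<and> g q2 \<in> sdom (cp g d (Y d))))"
  proof
    assume "map g ps \<in> sint (Ecomb (fam g D Y)) None"
    then obtain a b d where ab: "map g ps = [a,b]" "d \<in> D" "a \<in> sdom (cp g d (Y d))" "b \<in> sdom (cp g d (Y d))"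
      by (auto simp: Ecomb_def fam_def)
    then obtain q1 q2 where "ps = [q1,q2]" "a = g q1" "b = g q2"
      by (auto simp: map_eq_Cons_conv)
    then show "\<exists>q1 q2. ps = [q1,q2] \<and> (\<exists>d\<in>D. g q1 \<in> sdom (cp g d (Y d)) \<and> g q2 \<in> sdom (cp g d (Y d)))"
      using ab by blast
  next
    assume "\<exists>q1 q2. ps = [q1,q2] \<and> (\<exists>d\<in>D. g q1 \<in> sdom (cp g d (Y d)) \<and> g q2 \<in> sdom (cp g d (Y d)))"
    then show "map g ps \<in> sint (Ecomb (fam g D Y)) None"
      by (auto simp: Ecomb_def fam_def)
  qed
  also have "\<dots> = (length ps = 2 \<and> (\<exists>d\<in>D. \<forall>q\<in>set ps. fst q = d \<and> snd q \<in> sdom (Y d)))"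
  proof
    assume "\<exists>q1 q2. ps = [q1,q2] \<and> (\<exists>d\<in>D. g q1 \<in> sdom (cp g d (Y d)) \<and> g q2 \<in> sdom (cp g d (Y d)))"
    then show "length ps = 2 \<and> (\<exists>d\<in>D. \<forall>q\<in>set ps. fst q = d \<and> snd q \<in> sdom (Y d))"
      unfolding mem by auto
  next
    assume h: "length ps = 2 \<and> (\<exists>d\<in>D. \<forall>q\<in>set ps. fst q = d \<and> snd q \<in> sdom (Y d))"
    then obtain q1 q2 where ps: "ps = [q1,q2]"
      by (cases ps; cases "tl ps") (auto simp: numeral_2_eq_2)
    then show "\<exists>q1 q2. ps = [q1,q2] \<and> (\<exists>d\<in>D. g q1 \<in> sdom (cp g d (Y d)) \<and> g q2 \<in> sdom (cp g d (Y d)))"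
      using h unfolding mem by auto
  qed
  finally show ?thesis .
qed

lemma cp_Th: assumes g: "inj g" shows "Th ar P (cp g d A) = Th ar P A"
proof -
  have i: "inj (\<lambda>x. g (d,x))" using g by (auto simp: inj_def)
  show ?thesis
  proof (rule iso_Th[symmetric, of "\<lambda>x. g (d,x)"])
    show "inj_on (\<lambda>x. g (d, x)) (sdom A)" using i by (simp add: inj_on_def inj_def)
    show "(\<lambda>x. g (d, x)) ` sdom A = sdom (cp g d A)" by (simp add: cp_def)
    fix p xs
    show "(map (\<lambda>x. g (d, x)) xs \<in> sint (cp g d A) p) = (xs \<in> sint A p)"
      using inj_map_eq_map[OF i] by (auto simp: cp_def)
  qed
qed

lemma cp_struct: assumes "is_struct ar P A" shows "is_struct ar P (cp g d A)"
  unfolding is_struct_def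
proof (intro conjI ballI)
  show "sdom (cp g d A) \<noteq> {}" using assms by (simp add: is_struct_def cp_def)
  fix p assume p: "p \<in> P"
  have s: "sint A p \<subseteq> {xs. length xs = ar p \<and> set xs \<subseteq> sdom A}" using assms p by (simp add: is_struct_def)
  show "sint (cp g d A) p \<subseteq> {xs. length xs = ar p \<and> set xs \<subseteq> sdom (cp g d A)}"
  proof
    fix xs assume "xs \<in> sint (cp g d A) p"
    then obtain zs where zs: "zs \<in> sint A p" "xs = map (\<lambda>x. g (d,x)) zs" by (auto simp: cp_def)
    then have "length zs = ar p" "set zs \<subseteq> sdom A" using s by auto
    then show "xs \<in> {xs. length xs = ar p \<and> set xs \<subseteq> sdom (cp g d A)}" using zs by (auto simp: cp_def)
  qed
qed

lemma Ecomb_struct: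
  assumes "\<forall>A\<in>\<A>. is_struct ar \<Sigma> A" "\<A> \<noteq> {}"
  shows "is_struct (arE ar) (SigE \<Sigma>) (Ecomb \<A>)"
proof -
  have h1: "sdom (Ecomb \<A>) \<noteq> {}" using assms by (auto simp: Ecomb_def is_struct_def)
  have h2: "sint (Ecomb \<A>) None \<subseteq> {xs. length xs = 2 \<and> set xs \<subseteq> sdom (Ecomb \<A>)}"
    by (auto simp: Ecomb_def)
  have h3: "sint (Ecomb \<A>) (Some p) \<subseteq> {xs. length xs = ar p \<and> set xs \<subseteq> sdom (Ecomb \<A>)}"
    if "p \<in> \<Sigma>" for p
  proof
    fix xs assume "xs \<in> sint (Ecomb \<A>) (Some p)"
    then obtain A where A: "A \<in> \<A>" "xs \<in> sint A p" by (auto simp: Ecomb_def)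
    then have "length xs = ar p \<and> set xs \<subseteq> sdom A" using assms(1) that unfolding is_struct_def by blast
    then show "xs \<in> {xs. length xs = ar p \<and> set xs \<subseteq> sdom (Ecomb \<A>)}" using A by (auto simp: Ecomb_def)
  qed
  show ?thesis unfolding is_struct_def
  proof (intro conjI ballI)
    show "sdom (Ecomb \<A>) \<noteq> {}" by (rule h1)
    fix q assume q: "q \<in> SigE \<Sigma>"
    show "sint (Ecomb \<A>) q \<subseteq> {xs. length xs = arE ar q \<and> set xs \<subseteq> sdom (Ecomb \<A>)}"
    proof (cases q)
      case None then show ?thesis using h2 by (simp add: arE_def)
    next
      case (Some p)
      then have "p \<in> \<Sigma>" using q by (auto simp: SigE_def)
      then show ?thesis using h3[of p] Some by (simp add: arE_def)
    qed
  qed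
qed


lemma fam_iso_models:
  fixes g :: "('d \<times> 'u) \<Rightarrow> 'u" and \<sigma> :: "'d \<Rightarrow> 'd" and Y :: "'d \<Rightarrow> ('p,'u) struc"
    and \<phi> :: "'p option fm"
  assumes g: "inj g" and \<sigma>: "bij_betw \<sigma> D1 D2" and U: "\<And>d. sdom (Y d) = U"
    and agree: "\<And>d p. d \<in> D1 \<Longrightarrow> p \<in> P \<Longrightarrow> sint (Y (\<sigma> d)) p = sint (Y d) p"
    and wf: "wf_fm ar' (insert None (Some ` P)) \<phi>"
  shows "models (Ecomb (fam g D2 Y)) \<phi> = models (Ecomb (fam g D1 Y)) \<phi>"
proof -
  define \<Phi> where "\<Phi> = (\<lambda>y. g (\<sigma> (fst (inv g y)), snd (inv g y)))"
  define \<tau> where "\<tau> = (\<lambda>r::'d \<times> 'u. (\<sigma> (fst r), snd r))"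
  have \<Phi>g: "\<Phi> (g r) = g (\<tau> r)" for r :: "'d \<times> 'u" using g by (simp add: \<Phi>_def \<tau>_def)
  have domE: "sdom (Ecomb (fam g D Y)) = g ` (D \<times> U)" for D
    unfolding Ecomb_fam_dom U by auto
  have injs: "inj_on \<sigma> D1" and imgs: "\<sigma> ` D1 = D2" using \<sigma> by (auto simp: bij_betw_def)
  have fsteq: "(\<forall>q\<in>set (map \<tau> ps). fst q = \<sigma> d1) = (\<forall>q\<in>set ps. fst q = d1)"
    if ps: "set ps \<subseteq> D1 \<times> U" and d1: "d1 \<in> D1" for ps d1
  proof -
    have "(\<sigma> (fst q) = \<sigma> d1) = (fst q = d1)" if "q \<in> set ps" for q
      using that ps d1 injs by (auto simp: inj_on_def)
    then show ?thesis by (auto simp: \<tau>_def)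
  qed
  show ?thesis
  proof (rule iso_models[OF _ _ _ wf, of \<Phi>])
    show "inj_on \<Phi> (sdom (Ecomb (fam g D1 Y)))"
      unfolding domE inj_on_def
    proof (clarify)
      fix d x d' x' assume a: "d \<in> D1" "x \<in> U" "d' \<in> D1" "x' \<in> U" "\<Phi> (g (d, x)) = \<Phi> (g (d', x'))"
      then have "\<sigma> d = \<sigma> d'" "x = x'" using g by (auto simp: \<Phi>g \<tau>_def inj_eq)
      then show "g (d, x) = g (d', x')" using injs a by (auto simp: inj_on_def)
    qed
    show "\<Phi> ` sdom (Ecomb (fam g D1 Y)) = sdom (Ecomb (fam g D2 Y))"
      unfolding domE
    proof
      show "\<Phi> ` g ` (D1 \<times> U) \<subseteq> g ` (D2 \<times> U)" using imgs by (auto simp: \<Phi>g \<tau>_def)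
      show "g ` (D2 \<times> U) \<subseteq> \<Phi> ` g ` (D1 \<times> U)"
      proof
        fix y assume "y \<in> g ` (D2 \<times> U)"
        then obtain d2 x where y: "d2 \<in> D2" "x \<in> U" "y = g (d2, x)" by auto
        then obtain d1 where d1: "d1 \<in> D1" "d2 = \<sigma> d1" using imgs by auto
        then have "y = \<Phi> (g (d1, x))" using y by (simp add: \<Phi>g \<tau>_def)
        then show "y \<in> \<Phi> ` g ` (D1 \<times> U)" using d1 y by auto
      qed
    qed
    fix q xs assume q: "q \<in> insert None (Some ` P)" and xs: "set xs \<subseteq> sdom (Ecomb (fam g D1 Y))"
    obtain ps where ps: "set ps \<subseteq> D1 \<times> U" "xs = map g ps"
      using lists_decomp[of xs g "D1 \<times> U"] xs unfolding domE by blast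
    have mx: "map \<Phi> xs = map g (map \<tau> ps)" using ps(2) by (simp add: \<Phi>g)
    show "(map \<Phi> xs \<in> sint (Ecomb (fam g D2 Y)) q) = (xs \<in> sint (Ecomb (fam g D1 Y)) q)"
    proof (cases q)
      case None
      have "(map g (map \<tau> ps) \<in> sint (Ecomb (fam g D2 Y)) None) =
        (length ps = 2 \<and> (\<exists>d\<in>D2. \<forall>q\<in>set (map \<tau> ps). fst q = d \<and> snd q \<in> U))"
        unfolding Ecomb_fam_None[OF g] U length_map ..
      also have "\<dots> = (length ps = 2 \<and> (\<exists>d\<in>D1. \<forall>q\<in>set ps. fst q = d \<and> snd q \<in> U))"
      proof -
        have "(\<exists>d\<in>D2. \<forall>q\<in>set (map \<tau> ps). fst q = d \<and> snd q \<in> U) =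
              (\<exists>d1\<in>D1. \<forall>q\<in>set (map \<tau> ps). fst q = \<sigma> d1 \<and> snd q \<in> U)"
          using imgs by blast
        also have "\<dots> = (\<exists>d1\<in>D1. \<forall>q\<in>set ps. fst q = d1 \<and> snd q \<in> U)"
        proof (rule bex_cong[OF refl])
          fix d1 assume d1: "d1 \<in> D1"
          have "(\<forall>q\<in>set (map \<tau> ps). snd q \<in> U) = (\<forall>q\<in>set ps. snd q \<in> U)" by (auto simp: \<tau>_def)
          then show "(\<forall>q\<in>set (map \<tau> ps). fst q = \<sigma> d1 \<and> snd q \<in> U) = (\<forall>q\<in>set ps. fst q = d1 \<and> snd q \<in> U)"
            using fsteq[OF ps(1) d1] by blast
        qed
        finally show ?thesis by simp
      qed
      also have "\<dots> = (map g ps \<in> sint (Ecomb (fam g D1 Y)) None)"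
        unfolding Ecomb_fam_None[OF g] U ..
      finally show ?thesis unfolding None mx unfolding ps(2) .
    next
      case (Some p)
      then have p: "p \<in> P" using q by auto
      have ms: "map snd (map \<tau> ps) = map snd ps" by (simp add: \<tau>_def)
      have "(map g (map \<tau> ps) \<in> sint (Ecomb (fam g D2 Y)) (Some p)) =
        (\<exists>d\<in>D2. (\<forall>q\<in>set (map \<tau> ps). fst q = d) \<and> map snd ps \<in> sint (Y d) p)"
        unfolding Ecomb_fam_Some[OF g] ms ..
      also have "\<dots> = (\<exists>d1\<in>D1. (\<forall>q\<in>set (map \<tau> ps). fst q = \<sigma> d1) \<and> map snd ps \<in> sint (Y (\<sigma> d1)) p)"
        using imgs by blast
      also have "\<dots> = (\<exists>d1\<in>D1. (\<forall>q\<in>set ps. fst q = d1) \<and> map snd ps \<in> sint (Y d1) p)"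
        using fsteq[OF ps(1)] agree[OF _ p] by (intro bex_cong refl) simp
      also have "\<dots> = (map g ps \<in> sint (Ecomb (fam g D1 Y)) (Some p))"
        unfolding Ecomb_fam_Some[OF g] ..
      finally show ?thesis unfolding Some mx unfolding ps(2) .
    qed
  qed
qed


context setting
begin

lemma nil_st: assumes "p \<in> SS" shows "([] \<in> sint (st Z) p) = ([] \<in> sint (st Z') p)"
proof (cases "p \<in> II")
  case True
  then have "p \<in> \<Sigma>0" "ar p = n" using II_props by auto
  then have "[] \<notin> sint N0 p" using N0_struct n_pos unfolding is_struct_def by fastforce
  then show ?thesis by (simp add: str_def)
next
  case False
  then show ?thesis by (simp add: str_def)
qed

lemma backward:
  fixes g :: "('s \<times> nat) \<times> 'u \<Rightarrow> 'u" and sel :: "'s \<Rightarrow> 's set" and K :: "'s set"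
  assumes g: "inj g" and Fsub: "\<forall>I\<in>F. I \<subseteq> II" and JI: "J \<subseteq> II"
    and k0: "k0 \<in> K" and sel: "\<forall>k\<in>K. sel k \<in> F"
    and cover: "\<And>S. finite S \<Longrightarrow> \<exists>k\<in>K. sel k \<inter> S = J \<inter> S"
  shows "TT J \<in> ClE TYPE('u) ar SS (TT ` F)"
proof -
  define X where "X = (\<lambda>d::'s\<times>nat. if snd d = 0 then J else sel (fst d))"
  define Y where "Y = (\<lambda>d. st (X d))"
  define D1 where "D1 = {d::'s\<times>nat. fst d \<in> K \<and> snd d \<noteq> 0}"
  define d0 where "d0 = (k0, 0::nat)"
  define D2 where "D2 = insert d0 D1"
  define \<A> where "\<A> = fam g D1 Y"
  define M where "M = Ecomb (fam g D2 Y)"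
  define C where "C = (\<lambda>x. g (d0,x)) ` sdom N0"
  obtain x0 where x0: "x0 \<in> sdom N0" using N0_dom by blast
  define a where "a = g (d0, x0)"
  have YU: "\<And>d. sdom (Y d) = sdom N0" by (simp add: Y_def str_def)
  have domE: "\<And>D. sdom (Ecomb (fam g D Y)) = g ` (D \<times> sdom N0)"
    unfolding Ecomb_fam_dom YU by auto
  have Yd0: "Y d0 = st J" by (simp add: Y_def X_def d0_def)
  have YD1: "Y d = st (sel (fst d))" if "d \<in> D1" for d using that by (simp add: Y_def X_def D1_def)
  have TJ: "TT J = Th ar SS (induced M C)"
  proof -
    have "TT J = Th ar SS (cp g d0 (st J))" unfolding TI_str[OF JI] cp_Th[OF g, of ar SS d0 "st J"] ..
    also have "\<dots> = Th ar SS (induced M C)"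
    proof (rule iso_Th[of id])
      show "inj_on id (sdom (cp g d0 (st J)))" by simp
      show "id ` sdom (cp g d0 (st J)) = sdom (induced M C)"
        by (simp add: cp_def induced_def C_def str_def)
      fix p xs assume p: "p \<in> SS" and xs: "set xs \<subseteq> sdom (cp g d0 (st J))"
      have "set xs \<subseteq> g ` ({d0} \<times> sdom N0)" using xs by (auto simp: cp_def str_def)
      then obtain ps where ps: "set ps \<subseteq> {d0} \<times> sdom N0" "xs = map g ps"
        using lists_decomp by blast
      have xsC: "set xs \<subseteq> C" using ps unfolding C_def by auto
      have fst0: "\<forall>q\<in>set ps. fst q = d0" using ps by auto
      have "(xs \<in> sint (induced M C) p) = (map g ps \<in> sint M (Some p))"
        using xsC ps(2) by (simp add: induced_def)
      also have "\<dots> = (\<exists>d\<in>D2. (\<forall>q\<in>set ps. fst q = d) \<and> map snd ps \<in> sint (Y d) p)"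
        unfolding M_def by (rule Ecomb_fam_Some[OF g])
      also have "\<dots> = (map snd ps \<in> sint (st J) p)"
      proof (cases ps)
        case Nil
        have "(\<exists>d\<in>D2. [] \<in> sint (Y d) p) = ([] \<in> sint (st J) p)"
          using nil_st[OF p] Yd0 unfolding Y_def D2_def by auto
        then show ?thesis using Nil by simp
      next
        case (Cons q0 rest)
        then have "fst q0 = d0" using fst0 by simp
        then have "(\<exists>d\<in>D2. (\<forall>q\<in>set ps. fst q = d) \<and> map snd ps \<in> sint (Y d) p)
           = (map snd ps \<in> sint (Y d0) p)" using fst0 Cons by (auto simp: D2_def)
        then show ?thesis using Yd0 by simp
      qed
      also have "\<dots> = (xs \<in> sint (cp g d0 (st J)) p)"
      proof -
        have "(xs \<in> sint (cp g d0 (st J)) p) = (\<exists>zs\<in>sint (st J) p. map g ps = map (\<lambda>x. g (d0,x)) zs)"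
          using ps(2) by (auto simp: cp_def)
        also have "\<dots> = (map snd ps \<in> sint (st J) p)"
          unfolding map_g_eq[OF g] using fst0 by auto
        finally show ?thesis by simp
      qed
      finally show "(map id xs \<in> sint (induced M C) p) = (xs \<in> sint (cp g d0 (st J)) p)" by simp
    qed
    finally show ?thesis .
  qed
  obtain k1 where "k1 \<in> K" using k0 by blast
  have Ane: "\<A> \<noteq> {}"
  proof -
    have "(k0, 1) \<in> D1" using k0 by (simp add: D1_def)
    then show ?thesis by (auto simp: \<A>_def fam_def)
  qed
  have Astr: "\<forall>A\<in>\<A>. is_struct ar SS A \<and> Th ar SS A \<in> TT ` F"
  proof
    fix A assume "A \<in> \<A>"
    then obtain d where d: "d \<in> D1" "A = cp g d (Y d)" by (auto simp: \<A>_def fam_def)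
    have s: "sel (fst d) \<in> F" using d sel by (auto simp: D1_def)
    have "is_struct ar SS A" unfolding d(2) Y_def by (rule cp_struct[OF st_struct])
    moreover have "Th ar SS A = TT (sel (fst d))"
      using d cp_Th[OF g] YD1 TI_str s Fsub by simp
    ultimately show "is_struct ar SS A \<and> Th ar SS A \<in> TT ` F" using s by blast
  qed
  have disjg: "pairwise (\<lambda>A B. sdom A \<inter> sdom B = {}) (fam g D Y)" for D
    unfolding pairwise_def fam_def
  proof (intro ballI impI)
    fix A B assume A: "A \<in> (\<lambda>d. cp g d (Y d)) ` D" and B: "B \<in> (\<lambda>d. cp g d (Y d)) ` D" and ne: "A \<noteq> B"
    obtain d where d: "A = cp g d (Y d)" using A by blast
    obtain d' where d': "B = cp g d' (Y d')" using B by blast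
    have dd: "d \<noteq> d'" using ne d d' by blast
    show "sdom A \<inter> sdom B = {}"
    proof (rule ccontr)
      assume "sdom A \<inter> sdom B \<noteq> {}"
      then obtain x where x1: "x \<in> sdom A" and x2: "x \<in> sdom B" by blast
      obtain y where y: "x = g (d,y)" using x1 d by (auto simp: cp_def)
      obtain y' where y': "x = g (d',y')" using x2 d' by (auto simp: cp_def)
      have "(d,y) = (d',y')" using g y y' by (simp add: inj_eq)
      then show False using dd by simp
    qed
  qed
  have Mstr: "is_struct (arE ar) (SigE SS) M"
    unfolding M_def
  proof (rule Ecomb_struct)
    show "\<forall>A\<in>fam g D2 Y. is_struct ar SS A"
      unfolding fam_def Y_def by (auto intro!: cp_struct[OF st_struct])
    show "fam g D2 Y \<noteq> {}" by (simp add: fam_def D2_def)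
  qed
  have ThM: "Th (arE ar) (SigE SS) M = Th (arE ar) (SigE SS) (Ecomb \<A>)"
  proof -
    have "models M \<phi> = models (Ecomb \<A>) \<phi>" if s: "sentence (arE ar) (SigE SS) \<phi>" for \<phi>
    proof -
      define P where "P = {p. Some p \<in> syms \<phi>}"
      have Pfin: "finite P" unfolding P_def
        using finite_vimageI[OF finite_syms[of \<phi>], of Some] by (simp add: vimage_def)
      obtain ks where ks: "ks \<in> K" "sel ks \<inter> P = J \<inter> P" using cover[OF Pfin] by blast
      define \<sigma> where "\<sigma> = (\<lambda>d::'s\<times>nat. if d = (ks, 1) then d0 else if fst d = ks then (ks, snd d - 1) else d)"
      have bij: "bij_betw \<sigma> D1 D2"
        unfolding bij_betw_def
      proof
        show "inj_on \<sigma> D1"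
          unfolding inj_on_def \<sigma>_def D1_def d0_def by auto
        show "\<sigma> ` D1 = D2"
        proof
          show "\<sigma> ` D1 \<subseteq> D2" using ks(1) by (auto simp: \<sigma>_def D1_def D2_def d0_def)
          show "D2 \<subseteq> \<sigma> ` D1"
          proof
            fix d assume d: "d \<in> D2"
            show "d \<in> \<sigma> ` D1"
            proof (cases "d = d0")
              case True
              then have "d = \<sigma> (ks, 1)" by (simp add: \<sigma>_def)
              moreover have "(ks, 1) \<in> D1" using ks(1) by (simp add: D1_def)
              ultimately show ?thesis by blast
            next
              case False
              then have dD1: "d \<in> D1" using d by (simp add: D2_def)
              show ?thesis
              proof (cases "fst d = ks")
                case True
                have "d = \<sigma> (ks, snd d + 1)" using True dD1 by (cases d) (auto simp: \<sigma>_def D1_def)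
                moreover have "(ks, snd d + 1) \<in> D1" using ks(1) by (simp add: D1_def)
                ultimately show ?thesis by blast
              next
                case False
                then have "d = \<sigma> d" by (auto simp: \<sigma>_def)
                then show ?thesis using dD1 by blast
              qed
            qed
          qed
        qed
      qed
      have agree: "sint (Y (\<sigma> d)) p = sint (Y d) p" if d: "d \<in> D1" and p: "p \<in> P" for d p
      proof (cases "d = (ks, 1)")
        case True
        have "(p \<in> II - J) = (p \<in> II - sel ks)" using ks(2) p by blast
        then show ?thesis using True by (simp add: \<sigma>_def Y_def X_def d0_def str_def)
      next
        case False
        then show ?thesis using d by (cases d) (auto simp: \<sigma>_def Y_def X_def D1_def)
      qed
      have wf: "wf_fm (arE ar) (insert None (Some ` P)) \<phi>"
      proof -
        have "wf_fm (arE ar) (SigE SS \<inter> syms \<phi>) \<phi>"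
          using s wf_restrict[of "arE ar" "SigE SS" \<phi> "syms \<phi>"] by (simp add: sentence_def)
        moreover have "SigE SS \<inter> syms \<phi> \<subseteq> insert None (Some ` P)"
        proof
          fix q assume "q \<in> SigE SS \<inter> syms \<phi>"
          then show "q \<in> insert None (Some ` P)" by (cases q) (auto simp: P_def)
        qed
        ultimately show ?thesis by (rule wf_mono)
      qed
      show ?thesis unfolding M_def \<A>_def
        by (rule fam_iso_models[where Y=Y and P=P and U="sdom N0", OF g bij YU agree wf])
    qed
    then show ?thesis unfolding Th_def by blast
  qed
  have aM: "a \<in> sdom M" using x0 by (auto simp: a_def M_def domE D2_def)
  have Cclass: "C = {b \<in> sdom M. [a, b] \<in> sint M None}"
  proof (intro equalityI subsetI)
    fix b assume "b \<in> C"
    then obtain y where y: "y \<in> sdom N0" "b = g (d0, y)" by (auto simp: C_def)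
    have "[a, b] = map g [(d0,x0), (d0,y)]" by (simp add: a_def y)
    moreover have "map g [(d0,x0), (d0,y)] \<in> sint M None"
      unfolding M_def Ecomb_fam_None[OF g] YU using x0 y by (auto simp: D2_def)
    moreover have "b \<in> sdom M" using y by (auto simp: M_def domE D2_def)
    ultimately show "b \<in> {b \<in> sdom M. [a, b] \<in> sint M None}" by simp
  next
    fix b assume "b \<in> {b \<in> sdom M. [a, b] \<in> sint M None}"
    then have b: "b \<in> sdom M" "[a, b] \<in> sint M None" by auto
    then obtain r where r: "r \<in> D2 \<times> sdom N0" "b = g r" by (auto simp: M_def domE)
    have "[a, b] = map g [(d0,x0), r]" by (simp add: a_def r)
    then have "map g [(d0,x0), r] \<in> sint (Ecomb (fam g D2 Y)) None" using b(2) by (simp add: M_def)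
    then have "fst r = d0" unfolding Ecomb_fam_None[OF g] by auto
    then show "b \<in> C" using r by (cases r) (auto simp: C_def)
  qed
  show ?thesis
    unfolding ClE_def mem_Collect_eq
    apply (rule exI[of _ M], rule exI[of _ C])
    apply (intro conjI)
      apply (rule TJ)
     apply (rule exI[of _ \<A>])
     apply (intro conjI Ane Astr Mstr ThM)
     apply (simp add: \<A>_def disjg)
    using aM Cclass by blast
qed

end


lemma sq_inj: assumes "infinite (UNIV::'u set)" shows "\<exists>g::'u\<times>'u\<Rightarrow>'u. inj g"
proof -
  have "\<exists>g. bij_betw g ((UNIV::'u set) \<times> (UNIV::'u set)) (UNIV::'u set)"
    unfolding card_of_ordIso by (rule card_of_Times_same_infinite[OF assms])
  then obtain g where "bij_betw g ((UNIV::'u set) \<times> (UNIV::'u set)) (UNIV::'u set)" ..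
  then show ?thesis by (auto simp: bij_betw_def)
qed

lemma get_g:
  fixes f :: "'s \<Rightarrow> 'u"
  assumes f: "inj f" and inf: "infinite (UNIV :: 's set)"
  shows "\<exists>g :: ('s \<times> nat) \<times> 'u \<Rightarrow> 'u. inj g"
proof -
  have "infinite (range f)"
  proof
    assume "finite (range f)"
    then have "finite (UNIV :: 's set)" by (rule finite_imageD) (use f in simp)
    then show False using inf by simp
  qed
  then have uinf: "infinite (UNIV :: 'u set)" by (rule infinite_super[OF subset_UNIV])
  obtain h :: "'u \<times> 'u \<Rightarrow> 'u" where h: "inj h" using sq_inj[OF uinf] by blast
  obtain e :: "nat \<Rightarrow> 'u" where e: "inj e" using infinite_countable_subset[OF uinf] by (elim exE conjE)
  define g where "g = (\<lambda>p::('s \<times> nat) \<times> 'u. h (h (f (fst (fst p)), e (snd (fst p))), snd p))"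
  have "inj g"
  proof (rule injI)
    fix p q assume "g p = g q"
    then have "h (f (fst (fst p)), e (snd (fst p))) = h (f (fst (fst q)), e (snd (fst q))) \<and> snd p = snd q"
      using h by (simp add: g_def inj_eq)
    then have "f (fst (fst p)) = f (fst (fst q)) \<and> e (snd (fst p)) = e (snd (fst q)) \<and> snd p = snd q"
      using h by (simp add: inj_eq)
    then have "fst (fst p) = fst (fst q) \<and> snd (fst p) = snd (fst q) \<and> snd p = snd q"
      using f e by (simp add: inj_eq)
    then show "p = q" by (simp add: prod_eq_iff)
  qed
  then show ?thesis by blast
qed

lemma cover_union:
  assumes chain: "\<forall>I1\<in>F'. \<forall>I2\<in>F'. I1 \<subseteq> I2 \<or> I2 \<subseteq> I1" and J: "J = \<Union>F'" and k0: "k0 \<in> J"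
    and sel: "\<forall>k\<in>J. sel k \<in> F' \<and> k \<in> sel k"
    and S: "finite S"
  shows "\<exists>k\<in>J. sel k \<inter> S = J \<inter> S"
proof (cases "S \<inter> J = {}")
  case True
  have "sel k0 \<subseteq> J" using sel k0 J by blast
  then show ?thesis using True k0 by blast
next
  case False
  let ?B = "sel ` (S \<inter> J)"
  have "finite ?B" using S by simp
  moreover have "?B \<noteq> {}" using False by simp
  moreover have "subset.chain F' ?B" using chain sel by (auto simp: subset_chain_def)
  ultimately have "\<Union>?B \<in> ?B" using Union_in_chain by blast
  then obtain km where km: "km \<in> S \<inter> J" "sel km = \<Union>?B" by auto
  have "S \<inter> J \<subseteq> sel km" using km sel by auto
  moreover have "sel km \<subseteq> J" using sel km J by blast
  ultimately show ?thesis using km by blast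
qed

lemma cover_inter:
  assumes chain: "\<forall>I1\<in>F'. \<forall>I2\<in>F'. I1 \<subseteq> I2 \<or> I2 \<subseteq> I1" and J: "J = \<Inter>F'" and k0: "k0 \<in> - J"
    and sel: "\<forall>k\<in>-J. sel k \<in> F' \<and> k \<notin> sel k"
    and S: "finite S"
  shows "\<exists>k\<in>-J. sel k \<inter> S = J \<inter> S"
proof (cases "S - J = {}")
  case True
  have "J \<subseteq> sel k0" using sel k0 J by blast
  then show ?thesis using True k0 by blast
next
  case False
  let ?B = "sel ` (S - J)"
  have "finite ?B" using S by simp
  moreover have "?B \<noteq> {}" using False by simp
  moreover have "subset.chain F' ?B" using chain sel by (auto simp: subset_chain_def)
  ultimately have "\<Inter>?B \<in> ?B" using Inter_in_chain by blast
  then obtain km where km: "km \<in> S - J" "sel km = \<Inter>?B" by auto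
  have "sel km \<inter> (S - J) = {}" using km sel by auto
  moreover have "J \<subseteq> sel km" using sel km J by blast
  ultimately have "sel km \<inter> S = J \<inter> S" by blast
  then show ?thesis using km by blast
qed

theorem corollary4p7:
  fixes ar :: "'s \<Rightarrow> nat" and \<Sigma>0 :: "'s set" and T0 :: "'s fm set"
    and n :: nat and F :: "'s set set" and J :: "'s set"
  assumes universe_large: "\<exists>f :: 's \<Rightarrow> 'u. inj f"
    and T0_complete: "complete_theory TYPE('u) ar \<Sigma>0 T0"
    and T0_LU: "LU TYPE('u) ar \<Sigma>0 T0"
    and n_pos: "n \<ge> 1"
    and I0_inf: "infinite (I0 TYPE('u) ar \<Sigma>0 T0 n)"
    and F_inf: "infinite F"
    and F_index: "\<forall>I\<in>F. index_set TYPE('u) ar \<Sigma>0 T0 n I"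
    and F_chain: "\<forall>I1\<in>F. \<forall>I2\<in>F. I1 \<subseteq> I2 \<or> I2 \<subseteq> I1"
    and F_gaps: "\<forall>I1\<in>F. \<forall>I2\<in>F. I1 \<subset> I2 \<longrightarrow> infinite (I2 - I1)"
    and J_index: "index_set TYPE('u) ar \<Sigma>0 T0 n J"
    and J_new: "TI TYPE('u) ar \<Sigma>0 T0 n J \<notin> TI TYPE('u) ar \<Sigma>0 T0 n ` F"
  shows "TI TYPE('u) ar \<Sigma>0 T0 n J
           \<in> ClE TYPE('u) ar (Sigma' TYPE('u) ar \<Sigma>0 T0 n) (TI TYPE('u) ar \<Sigma>0 T0 n ` F)
         \<longleftrightarrow> (\<exists>F' \<subseteq> F. infinite F' \<and>
                ((J = \<Union>F' \<and> J \<notin> F') \<or> (J = \<Inter>F' \<and> J \<notin> F')))"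
proof -
  obtain N0 :: "('s,'u) struc" where N0: "is_struct ar \<Sigma>0 N0" "\<forall>\<psi>\<in>T0. models N0 \<psi>"
    using T0_complete unfolding complete_theory_def by blast
  have compl: "\<forall>\<phi>. sentence ar \<Sigma>0 \<phi> \<longrightarrow> \<phi> \<in> T0 \<or> Neg \<phi> \<in> T0"
    using T0_complete unfolding complete_theory_def by blast
  interpret setting ar \<Sigma>0 T0 n N0
    by (unfold_locales) (use N0 compl n_pos in auto)
  have Fsub: "\<forall>I\<in>F. I \<subseteq> II" using F_index by (auto simp: index_set_def)
  have JI: "J \<subseteq> II" and Jinf: "infinite J" using J_index by (auto simp: index_set_def)
  have Jne: "J \<noteq> {}" using Jinf by auto
  have JnF: "J \<notin> F"
  proof
    assume "J \<in> F"
    then have "TT J \<in> TT ` F" by (rule imageI)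
    then show False using J_new by simp
  qed
  show ?thesis
  proof
    assume cl: "TT J \<in> ClE TYPE('u) ar SS (TT ` F)"
    have P: "\<exists>I\<in>F. I \<inter> S = J \<inter> S" if S: "finite S" for S
    proof -
      obtain I where I: "I \<in> F" "I \<inter> (S \<inter> II) = J \<inter> (S \<inter> II)"
        using forward[OF Fsub JI cl, of "S \<inter> II"] S by auto
      have "I \<subseteq> II" using Fsub I(1) by blast
      then have "I \<inter> S = J \<inter> S" using I(2) JI by blast
      then show ?thesis using I(1) by blast
    qed
    show "\<exists>F' \<subseteq> F. infinite F' \<and> ((J = \<Union>F' \<and> J \<notin> F') \<or> (J = \<Inter>F' \<and> J \<notin> F'))"
      by (rule topo[OF F_chain F_inf JnF Jne P])
  next
    assume "\<exists>F' \<subseteq> F. infinite F' \<and> ((J = \<Union>F' \<and> J \<notin> F') \<or> (J = \<Inter>F' \<and> J \<notin> F'))"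
    then obtain F' where F': "F' \<subseteq> F" "infinite F'"
      and cases: "(J = \<Union>F' \<and> J \<notin> F') \<or> (J = \<Inter>F' \<and> J \<notin> F')" by blast
    have sinf: "infinite (UNIV :: 's set)" by (rule infinite_super[OF subset_UNIV I0_inf])
    obtain f :: "'s \<Rightarrow> 'u" where f: "inj f" using universe_large by blast
    obtain g :: "('s \<times> nat) \<times> 'u \<Rightarrow> 'u" where g: "inj g" using get_g[OF f sinf] by blast
    have chain': "\<forall>I1\<in>F'. \<forall>I2\<in>F'. I1 \<subseteq> I2 \<or> I2 \<subseteq> I1" using F_chain F'(1) by blast
    from cases show "TT J \<in> ClE TYPE('u) ar SS (TT ` F)"
    proof
      assume U: "J = \<Union>F' \<and> J \<notin> F'"
      define sel where "sel = (\<lambda>k. SOME I. I \<in> F' \<and> k \<in> I)"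
      have sel: "\<forall>k\<in>J. sel k \<in> F' \<and> k \<in> sel k"
      proof
        fix k assume "k \<in> J"
        then have "\<exists>I. I \<in> F' \<and> k \<in> I" using U by blast
        then show "sel k \<in> F' \<and> k \<in> sel k" unfolding sel_def by (rule someI_ex)
      qed
      obtain k0 where k0: "k0 \<in> J" using Jne by blast
      show ?thesis
      proof (rule backward[OF g Fsub JI k0])
        show "\<forall>k\<in>J. sel k \<in> F" using sel F'(1) by blast
        fix S :: "'s set" assume "finite S"
        then show "\<exists>k\<in>J. sel k \<inter> S = J \<inter> S"
          by (rule cover_union[OF chain' conjunct1[OF U] k0 sel])
      qed
    next
      assume Int: "J = \<Inter>F' \<and> J \<notin> F'"
      define sel where "sel = (\<lambda>k. SOME I. I \<in> F' \<and> k \<notin> I)"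
      have sel: "\<forall>k\<in>-J. sel k \<in> F' \<and> k \<notin> sel k"
      proof
        fix k assume "k \<in> - J"
        then have "\<exists>I. I \<in> F' \<and> k \<notin> I" using Int by blast
        then show "sel k \<in> F' \<and> k \<notin> sel k" unfolding sel_def by (rule someI_ex)
      qed
      have "- J \<noteq> {}"
      proof
        assume "- J = {}"
        then have "J = UNIV" by blast
        then have "F' \<subseteq> {UNIV}" using Int by blast
        then have "finite F'" by (rule finite_subset) simp
        then show False using F'(2) by simp
      qed
      then obtain k0 where k0: "k0 \<in> - J" by blast
      show ?thesis
      proof (rule backward[OF g Fsub JI k0])
        show "\<forall>k\<in>-J. sel k \<in> F" using sel F'(1) by blast
        fix S :: "'s set" assume "finite S"
        then show "\<exists>k\<in>-J. sel k \<inter> S = J \<inter> S"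
          by (rule cover_inter[OF chain' conjunct1[OF Int] k0 sel])
      qed
    qed
  qed
qed


end
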